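(* Let $p\ge1$ and let $\mathcal{Q}_*$ be the set of finite discrete probability measures $G$ on $\mathbb{R}^d\times S_d^{++}(\mathbb{R})$ such that $\int d((\mu,\Sigma),(\mu_0,\Sigma_0))^p\,dG(\mu,\Sigma)<\infty$ for every $(\mu_0,\Sigma_0)\in\mathbb{R}^d\times S_d^{++}(\mathbb{R})$, where $d((\mu_1,\Sigma_1),(\mu_2,\Sigma_2))=\sqrt{\|\mu_1-\mu_2\|_2^2+0.25\,\log(\lambda_{\max}(\Sigma_1,\Sigma_2))^2}$ and $\lambda_{\max}(\Sigma_1,\Sigma_2)$ is the largest eigenvalue of the generalized eigenvalue problem $\Sigma_1u=\lambda\Sigma_2u$. Then $\text{SMix-}W_p(G_1,G_2):=\big(\text{SMix-}W_p^p(G_1,G_2)\big)^{1/p}$ is a metric on $\mathcal{Q}_*$: it is nonnegative, symmetric, satisfies the triangle inequality, and $\text{SMix-}W_p(G_1,G_2)=0$ if and only if $G_1=G_2$.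
   Context: $S_d^{++}(\mathbb{R})$ is the set of $d\times d$ real symmetric positive definite matrices. Let $\mathbb{S}=\{w\in\mathbb{R}^2:\|w\|_2=1\}$ and $\mathbb{S}^{d-1}=\{v\in\mathbb{R}^d:\|v\|_2=1\}$, with $\mathcal{U}(\cdot)$ the uniform distribution. For $v\in\mathbb{S}^{d-1}$ and $w=(w_1,w_2)\in\mathbb{S}$ set $P_{v,w}(\mu,\Sigma)=w_1\langle v,\mu\rangle+w_2\log\big(\sqrt{v^\top\Sigma v}\big)$. For finite discrete probability measures $G_1,G_2$ on $\mathbb{R}^d\times S_d^{++}(\mathbb{R})$ the sliced mixture Wasserstein distance is $$\text{SMix-}W_p^p(G_1,G_2)=\mathbb{E}_{(w,v)\sim\mathcal{U}(\mathbb{S})\otimes\mathcal{U}(\mathbb{S}^{d-1})}\big[W_p^p(P_{v,w}\sharp G_1,P_{v,w}\sharp G_2)\big],$$ where $\sharp$ denotes push-forward and $W_p^p(\alpha,\beta)=\inf_{\pi\in\Pi(\alpha,\beta)}\int|x-y|^p\,d\pi(x,y)$ is the $p$-th power of the Wasserstein-$p$ distance between probability measures on $\mathbb{R}$. *)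

theory Defs
  imports "HOL-Probability.Probability"
begin

definition SPD :: "(real^'d^'d) set" where
  "SPD = {A. transpose A = A \<and> (\<forall>x. x \<noteq> 0 \<longrightarrow> x \<bullet> (A *v x) > 0)}"

definition lambda_max :: "real^'d^'d \<Rightarrow> real^'d^'d \<Rightarrow> real" where
  "lambda_max S1 S2 = Max {l. \<exists>u. u \<noteq> 0 \<and> S1 *v u = l *\<^sub>R (S2 *v u)}"

definition gdist :: "((real^'d) \<times> (real^'d^'d)) \<Rightarrow> ((real^'d) \<times> (real^'d^'d)) \<Rightarrow> real" where
  "gdist a b = sqrt ((norm (fst a - fst b))\<^sup>2 + 0.25 * (ln (lambda_max (snd a) (snd b)))\<^sup>2)"

definition Qstar :: "real \<Rightarrow> (((real^'d) \<times> (real^'d^'d)) pmf) set" where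
  "Qstar p = {G. finite (set_pmf G) \<and> set_pmf G \<subseteq> UNIV \<times> SPD \<and>
     (\<forall>m0 S0. S0 \<in> SPD \<longrightarrow>
        (\<integral>\<^sup>+ x. ennreal (gdist x (m0, S0) powr p) \<partial>measure_pmf G) < \<infinity>)}"

text \<open>Uniform distribution on the unit sphere of a Euclidean space: the push-forward
  of the uniform distribution on the unit ball under radial projection.\<close>
definition unif_sphere :: "('a::euclidean_space) measure" where
  "unif_sphere = distr (uniform_measure lborel (ball 0 1)) borel (\<lambda>x. x /\<^sub>R norm x)"

definition Wpp :: "real \<Rightarrow> real measure \<Rightarrow> real measure \<Rightarrow> ennreal" where
  "Wpp p \<alpha> \<beta> = (INF \<pi> \<in> {\<pi> :: (real \<times> real) measure. prob_space \<pi> \<and> sets \<pi> = sets borel \<and>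
        distr \<pi> borel fst = \<alpha> \<and> distr \<pi> borel snd = \<beta>}.
      \<integral>\<^sup>+ xy. ennreal (\<bar>fst xy - snd xy\<bar> powr p) \<partial>\<pi>)"

definition Pvw :: "real^'d \<Rightarrow> real^2 \<Rightarrow> ((real^'d) \<times> (real^'d^'d)) \<Rightarrow> real" where
  "Pvw v w x = w$1 * (v \<bullet> fst x) + w$2 * ln (sqrt (v \<bullet> (snd x *v v)))"

definition push :: "real^'d \<Rightarrow> real^2 \<Rightarrow> ((real^'d) \<times> (real^'d^'d)) pmf \<Rightarrow> real measure" where
  "push v w G = distr (measure_pmf G) borel (Pvw v w)"

definition SMixWpp :: "real \<Rightarrow> ((real^'d) \<times> (real^'d^'d)) pmf \<Rightarrow> ((real^'d) \<times> (real^'d^'d)) pmf \<Rightarrow> ennreal" where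
  "SMixWpp p G1 G2 = (\<integral>\<^sup>+ wv. Wpp p (push (snd wv) (fst wv) G1) (push (snd wv) (fst wv) G2)
      \<partial>(unif_sphere \<Otimes>\<^sub>M (unif_sphere :: (real^'d) measure)))"

definition SMixWp :: "real \<Rightarrow> ((real^'d) \<times> (real^'d^'d)) pmf \<Rightarrow> ((real^'d) \<times> (real^'d^'d)) pmf \<Rightarrow> real" where
  "SMixWp p G1 G2 = enn2real (SMixWpp p G1 G2) powr (1 / p)"

end

theory Submission
  imports Defs
begin

lemma powr_convex_ineq:
  fixes a b t p :: real
  assumes "p \<ge> 1" "0 \<le> a" "0 \<le> b" "0 \<le> t" "t \<le> 1"
  shows "(t * a + (1 - t) * b) powr p \<le> t * a powr p + (1 - t) * b powr p"
proof (cases "a = 0 \<or> b = 0")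
  case False
  then have "a > 0" "b > 0" using assms by auto
  have "convex_on {0<..} (\<lambda>x. x powr p)" using powr_convex assms(1) .
  from convex_onD[OF this, of t b a] assms \<open>a>0\<close> \<open>b>0\<close>
  show ?thesis by (simp add: algebra_simps)
next
  case True
  have k: "c powr p \<le> c" if "0 \<le> c" "c \<le> 1" for c :: real
  proof (cases "c = 0")
    case False thus ?thesis using powr_le_one_le[of c p] that assms by auto
  qed simp
  show ?thesis
  proof (cases "a = 0")
    case True
    have "((1 - t) * b) powr p = (1 - t) powr p * b powr p" using assms by (simp add: powr_mult)
    also have "\<dots> \<le> (1 - t) * b powr p" using k[of "1-t"] assms by (intro mult_right_mono) auto
    finally show ?thesis using True assms by simp
  next
    case False
    with True have "b = 0" by auto
    have "(t * a) powr p = t powr p * a powr p" using assms by (simp add: powr_mult)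
    also have "\<dots> \<le> t * a powr p" using k[of "t"] assms by (intro mult_right_mono) auto
    finally show ?thesis using \<open>b = 0\<close> assms by simp
  qed
qed

lemma minkowski_nn:
  fixes f g :: "'a \<Rightarrow> real"
  assumes p: "p \<ge> 1"
    and f: "f \<in> borel_measurable M" and g: "g \<in> borel_measurable M"
    and f0: "\<And>x. f x \<ge> 0" and g0: "\<And>x. g x \<ge> 0"
    and fi: "(\<integral>\<^sup>+x. ennreal (f x powr p) \<partial>M) < \<infinity>"
    and gi: "(\<integral>\<^sup>+x. ennreal (g x powr p) \<partial>M) < \<infinity>"
  shows "(\<integral>\<^sup>+x. ennreal ((f x + g x) powr p) \<partial>M) \<le>
     ennreal ((enn2real (\<integral>\<^sup>+x. ennreal (f x powr p) \<partial>M) powr (1/p) +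
               enn2real (\<integral>\<^sup>+x. ennreal (g x powr p) \<partial>M) powr (1/p)) powr p)"
proof -
  define X where "X = enn2real (\<integral>\<^sup>+x. ennreal (f x powr p) \<partial>M)"
  define Y where "Y = enn2real (\<integral>\<^sup>+x. ennreal (g x powr p) \<partial>M)"
  define A where "A = X powr (1/p)"
  define B where "B = Y powr (1/p)"
  have X0: "X \<ge> 0" "Y \<ge> 0" unfolding X_def Y_def by auto
  have IX: "(\<integral>\<^sup>+x. ennreal (f x powr p) \<partial>M) = ennreal X"
    unfolding X_def using fi by (simp add: ennreal_enn2real_if)
  have IY: "(\<integral>\<^sup>+x. ennreal (g x powr p) \<partial>M) = ennreal Y"
    unfolding Y_def using gi by (simp add: ennreal_enn2real_if)
  have AX: "A powr p = X" unfolding A_def using X0 p by (simp add: powr_powr)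
  have BY: "B powr p = Y" unfolding B_def using X0 p by (simp add: powr_powr)
  have A0: "A \<ge> 0" "B \<ge> 0" unfolding A_def B_def by auto
  have fm: "(\<lambda>x. f x powr p) \<in> borel_measurable M" using f by measurable
  have gm: "(\<lambda>x. g x powr p) \<in> borel_measurable M" using g by measurable
  show ?thesis
  proof (cases "A = 0")
    case True
    then have "X = 0" unfolding A_def using X0 by simp
    then have "AE x in M. ennreal (f x powr p) = 0"
      using IX fm by (subst nn_integral_0_iff_AE[symmetric]) auto
    then have "AE x in M. f x = 0" by (auto elim!: AE_mp)
    then have "(\<integral>\<^sup>+x. ennreal ((f x + g x) powr p) \<partial>M) = (\<integral>\<^sup>+x. ennreal (g x powr p) \<partial>M)"
      by (intro nn_integral_cong_AE) (auto elim!: AE_mp)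
    also have "\<dots> = ennreal ((A + B) powr p)" using IY BY True by simp
    finally show ?thesis unfolding A_def B_def X_def Y_def by simp
  next
    case An: False
    show ?thesis
    proof (cases "B = 0")
      case True
      then have "Y = 0" unfolding B_def using X0 by simp
      then have "AE x in M. ennreal (g x powr p) = 0"
        using IY gm by (subst nn_integral_0_iff_AE[symmetric]) auto
      then have "AE x in M. g x = 0" by (auto elim!: AE_mp)
      then have "(\<integral>\<^sup>+x. ennreal ((f x + g x) powr p) \<partial>M) = (\<integral>\<^sup>+x. ennreal (f x powr p) \<partial>M)"
        by (intro nn_integral_cong_AE) (auto elim!: AE_mp)
      also have "\<dots> = ennreal ((A + B) powr p)" using IX AX True by simp
      finally show ?thesis unfolding A_def B_def X_def Y_def by simp
    next
      case Bn: False
      have Ap: "A > 0" "B > 0" using An Bn A0 by auto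
      define t where "t = A / (A + B)"
      have t: "0 \<le> t" "t \<le> 1" "1 - t = B / (A + B)" using Ap unfolding t_def by (auto simp: field_simps)
      have pw: "(f x + g x) powr p \<le> (A + B) powr p * (t / A powr p) * f x powr p
                 + (A + B) powr p * ((1 - t) / B powr p) * g x powr p" for x
      proof -
        have "(f x + g x) = (A + B) * (t * (f x / A) + (1 - t) * (g x / B))"
        proof -
          have "t * (f x / A) = f x / (A + B)" using Ap unfolding t_def by (simp add: field_simps)
          moreover have "(1 - t) * (g x / B) = g x / (A + B)" by (subst t(3)) (use Ap in \<open>simp add: field_simps\<close>)
          ultimately have "(A + B) * (t * (f x / A) + (1 - t) * (g x / B)) = (A + B) * (f x / (A + B) + g x / (A + B))" by simp
          also have "\<dots> = f x + g x" using Ap by (simp only: add_divide_distrib[symmetric]) simp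
          finally show ?thesis by simp
        qed
        then have "(f x + g x) powr p = (A + B) powr p * (t * (f x / A) + (1 - t) * (g x / B)) powr p"
          using Ap t f0[of x] g0[of x] by (simp add: powr_mult)
        also have "\<dots> \<le> (A + B) powr p * (t * (f x / A) powr p + (1 - t) * (g x / B) powr p)"
          using powr_convex_ineq[OF p, of "f x / A" "g x / B" t] Ap t f0[of x] g0[of x]
          by (intro mult_left_mono) auto
        also have "\<dots> = (A + B) powr p * (t / A powr p) * f x powr p
                 + (A + B) powr p * ((1 - t) / B powr p) * g x powr p"
          using Ap by (simp add: powr_divide field_simps)
        finally show ?thesis .
      qed
      have c0: "0 \<le> (A + B) powr p * (t / A powr p)" "0 \<le> (A + B) powr p * ((1 - t) / B powr p)"
        using t Ap by auto
      have "(\<integral>\<^sup>+x. ennreal ((f x + g x) powr p) \<partial>M) \<le>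
            (\<integral>\<^sup>+x. ennreal ((A + B) powr p * (t / A powr p)) * ennreal (f x powr p)
                 + ennreal ((A + B) powr p * ((1 - t) / B powr p)) * ennreal (g x powr p) \<partial>M)"
      proof (intro nn_integral_mono)
        fix x
        define c1 where "c1 = (A + B) powr p * (t / A powr p)"
        define c2 where "c2 = (A + B) powr p * ((1 - t) / B powr p)"
        have "ennreal ((f x + g x) powr p) \<le> ennreal (c1 * f x powr p + c2 * g x powr p)"
          using pw[of x] unfolding c1_def c2_def by (intro ennreal_leI) (simp add: mult.assoc)
        also have "\<dots> = ennreal c1 * ennreal (f x powr p) + ennreal c2 * ennreal (g x powr p)"
          using c0 unfolding c1_def[symmetric] c2_def[symmetric]
          by (simp add: ennreal_plus[symmetric] ennreal_mult[symmetric] del: ennreal_plus)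
        finally show "ennreal ((f x + g x) powr p) \<le> ennreal ((A + B) powr p * (t / A powr p)) * ennreal (f x powr p)
                 + ennreal ((A + B) powr p * ((1 - t) / B powr p)) * ennreal (g x powr p)"
          unfolding c1_def c2_def .
      qed
      also have "\<dots> = ennreal ((A + B) powr p * (t / A powr p)) * ennreal X
                 + ennreal ((A + B) powr p * ((1 - t) / B powr p)) * ennreal Y"
        using fm gm IX IY by (simp add: nn_integral_add nn_integral_cmult)
      also have "\<dots> = ennreal ((A + B) powr p * (t / A powr p) * X + (A + B) powr p * ((1 - t) / B powr p) * Y)"
      proof -
        have n1: "0 \<le> (A + B) powr p * (t / A powr p) * X" "0 \<le> (A + B) powr p * ((1 - t) / B powr p) * Y"
          using c0 X0 by (metis mult_nonneg_nonneg)+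
        show ?thesis using c0 X0
          by (simp only: ennreal_plus[OF n1, symmetric] ennreal_mult[symmetric])
      qed
      also have "(A + B) powr p * (t / A powr p) * X + (A + B) powr p * ((1 - t) / B powr p) * Y = (A + B) powr p"
      proof -
        have "A powr p > 0" "B powr p > 0" using Ap by auto
        then have "(A + B) powr p * (t / A powr p) * A powr p = (A + B) powr p * t"
             "(A + B) powr p * ((1 - t) / B powr p) * B powr p = (A + B) powr p * (1 - t)" by auto
        then show ?thesis unfolding AX[symmetric] BY[symmetric] by (simp add: algebra_simps)
      qed
      finally show ?thesis unfolding A_def B_def X_def Y_def by simp
    qed
  qed
qed

definition coup :: "'a pmf \<Rightarrow> 'b pmf \<Rightarrow> ('a \<times> 'b) pmf set" where
  "coup G1 G2 = {\<gamma>. map_pmf fst \<gamma> = G1 \<and> map_pmf snd \<gamma> = G2}"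

definition cost :: "real \<Rightarrow> ('a \<Rightarrow> real) \<Rightarrow> ('a \<times> 'a) pmf \<Rightarrow> ennreal" where
  "cost p f \<gamma> = (\<integral>\<^sup>+xy. ennreal (\<bar>f (fst xy) - f (snd xy)\<bar> powr p) \<partial>measure_pmf \<gamma>)"

definition CW :: "real \<Rightarrow> ('a \<Rightarrow> real) \<Rightarrow> 'a pmf \<Rightarrow> 'a pmf \<Rightarrow> ennreal" where
  "CW p f G1 G2 = (INF \<gamma>\<in>coup G1 G2. cost p f \<gamma>)"

lemma pair_in_coup: "pair_pmf G1 G2 \<in> coup G1 G2"
  by (simp add: coup_def map_fst_pair_pmf map_snd_pair_pmf)

lemma coup_set: "\<gamma> \<in> coup G1 G2 \<Longrightarrow> set_pmf \<gamma> \<subseteq> set_pmf G1 \<times> set_pmf G2"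
  unfolding coup_def by (auto simp del: set_map_pmf simp add: set_map_pmf[symmetric]) (force+)

lemma coup_finite: "\<gamma> \<in> coup G1 G2 \<Longrightarrow> finite (set_pmf G1) \<Longrightarrow> finite (set_pmf G2) \<Longrightarrow> finite (set_pmf \<gamma>)"
  using coup_set by (metis finite_SigmaI finite_subset)

lemma cost_finite: "finite (set_pmf \<gamma>) \<Longrightarrow> cost p f \<gamma> < \<infinity>"
  unfolding cost_def by (subst nn_integral_measure_pmf_finite) (auto simp: ennreal_mult_less_top)

lemma CW_le_cost: "\<gamma> \<in> coup G1 G2 \<Longrightarrow> CW p f G1 G2 \<le> cost p f \<gamma>"
  unfolding CW_def by (rule INF_lower)

lemma CW_finite: "finite (set_pmf G1) \<Longrightarrow> finite (set_pmf G2) \<Longrightarrow> CW p f G1 G2 < \<infinity>"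
  using CW_le_cost[OF pair_in_coup] cost_finite coup_finite[OF pair_in_coup]
  by (meson le_less_trans)

lemma CW_sym: "CW p f G1 G2 = CW p f G2 G1"
proof -
  have *: "CW p f G1 G2 \<le> CW p f G2 G1" for G1 G2 :: "'a pmf"
    unfolding CW_def
  proof (rule INF_greatest)
    fix \<gamma> assume g: "\<gamma> \<in> coup G2 G1"
    have "map_pmf prod.swap \<gamma> \<in> coup G1 G2" using g by (simp add: coup_def map_pmf_comp)
    moreover have "cost p f (map_pmf prod.swap \<gamma>) = cost p f \<gamma>"
      unfolding cost_def by (simp add: abs_minus_commute)
    ultimately show "(INF \<gamma>\<in>coup G1 G2. cost p f \<gamma>) \<le> cost p f \<gamma>" by (metis INF_lower)
  qed
  show ?thesis using *[of G1 G2] *[of G2 G1] by simp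
qed

lemma CW_diag: "p > 0 \<Longrightarrow> CW p f G G = 0"
proof -
  assume p: "p > 0"
  have "map_pmf (\<lambda>x. (x, x)) G \<in> coup G G" by (simp add: coup_def map_pmf_comp)
  moreover have "cost p f (map_pmf (\<lambda>x. (x, x)) G) = 0" unfolding cost_def using p by simp
  ultimately show ?thesis using CW_le_cost by (metis le_zero_eq)
qed

lemma glue:
  assumes "\<gamma>1 \<in> coup G1 G2" "\<gamma>2 \<in> coup G2 G3"
  shows "\<exists>\<tau>. map_pmf (\<lambda>(x,y,z). (x,y)) \<tau> = \<gamma>1 \<and> map_pmf (\<lambda>(x,y,z). (y,z)) \<tau> = \<gamma>2"
proof -
  have m1: "map_pmf snd \<gamma>1 = G2" "map_pmf fst \<gamma>2 = G2" using assms by (auto simp: coup_def)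
  have ne: "set_pmf \<gamma>2 \<inter> {yz. fst yz = y} \<noteq> {}" if "y \<in> set_pmf G2" for y
    using that m1(2) by force
  define \<tau> where "\<tau> = bind_pmf \<gamma>1 (\<lambda>xy. map_pmf (\<lambda>yz. (fst xy, snd xy, snd yz)) (cond_pmf \<gamma>2 {yz. fst yz = snd xy}))"
  have "map_pmf (\<lambda>(x,y,z). (x,y)) \<tau> = bind_pmf \<gamma>1 return_pmf"
    unfolding \<tau>_def map_bind_pmf by (simp add: map_pmf_comp)
  then have A: "map_pmf (\<lambda>(x,y,z). (x,y)) \<tau> = \<gamma>1" by (simp add: bind_return_pmf')
  have "map_pmf (\<lambda>(x,y,z). (y,z)) \<tau> = bind_pmf \<gamma>1 (\<lambda>xy. cond_pmf \<gamma>2 {yz. fst yz = snd xy})"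
    unfolding \<tau>_def map_bind_pmf
  proof (intro bind_pmf_cong refl)
    fix xy assume xy: "xy \<in> set_pmf \<gamma>1"
    then have "snd xy \<in> set_pmf G2" using m1(1) by force
    note ne' = ne[OF this]
    show "map_pmf (\<lambda>(x,y,z). (y,z)) (map_pmf (\<lambda>yz. (fst xy, snd xy, snd yz)) (cond_pmf \<gamma>2 {yz. fst yz = snd xy}))
        = cond_pmf \<gamma>2 {yz. fst yz = snd xy}"
      unfolding map_pmf_comp by (rule map_pmf_idI) (use set_cond_pmf[OF ne'] in auto)
  qed
  also have "\<dots> = bind_pmf G2 (\<lambda>y. cond_pmf \<gamma>2 {yz. fst yz = y})"
    using m1(1) bind_map_pmf[of snd \<gamma>1 "\<lambda>y. cond_pmf \<gamma>2 {yz. fst yz = y}"] by simp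
  also have "\<dots> = \<gamma>2"
  proof (rule bind_cond_pmf_cancel)
    show "\<And>x. x \<in> set_pmf G2 \<Longrightarrow> set_pmf \<gamma>2 \<inter> {y. fst y = x} \<noteq> {}" using ne by auto
    show "\<And>y. y \<in> set_pmf \<gamma>2 \<Longrightarrow> set_pmf G2 \<inter> {x. fst y = x} \<noteq> {}"
      using m1(2) by force
    show "\<And>x y. x \<in> set_pmf G2 \<Longrightarrow> y \<in> set_pmf \<gamma>2 \<Longrightarrow> fst y = x \<Longrightarrow>
        measure (measure_pmf \<gamma>2) {y. fst y = x} = measure (measure_pmf G2) {xa. fst y = xa}"
      using m1(2) by (auto simp: vimage_def eq_commute)
  qed
  finally show ?thesis using A by blast
qed

lemma cost_tri:
  assumes p: "p \<ge> 1" and f1: "finite (set_pmf G1)" and f2: "finite (set_pmf G2)" and f3: "finite (set_pmf G3)"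
    and g1: "\<gamma>1 \<in> coup G1 G2" and g2: "\<gamma>2 \<in> coup G2 G3"
  shows "enn2real (CW p f G1 G3) powr (1/p) \<le> enn2real (cost p f \<gamma>1) powr (1/p) + enn2real (cost p f \<gamma>2) powr (1/p)"
proof -
  obtain \<tau> where t1: "map_pmf (\<lambda>(x,y,z). (x,y)) \<tau> = \<gamma>1" and t2: "map_pmf (\<lambda>(x,y,z). (y,z)) \<tau> = \<gamma>2"
    using glue[OF g1 g2] by blast
  define \<gamma>3 where "\<gamma>3 = map_pmf (\<lambda>(x,y,z). (x,z)) \<tau>"
  have "map_pmf fst \<gamma>3 = map_pmf fst (map_pmf (\<lambda>(x,y,z). (x,y)) \<tau>)"
    unfolding \<gamma>3_def map_pmf_comp by (intro map_pmf_cong) auto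
  moreover have "map_pmf snd \<gamma>3 = map_pmf snd (map_pmf (\<lambda>(x,y,z). (y,z)) \<tau>)"
    unfolding \<gamma>3_def map_pmf_comp by (intro map_pmf_cong) auto
  ultimately have g3: "\<gamma>3 \<in> coup G1 G3" using g1 g2 t1 t2 by (simp add: coup_def)
  define F where "F t = \<bar>f (fst t) - f (fst (snd t))\<bar>" for t :: "'a \<times> 'a \<times> 'a"
  define G where "G t = \<bar>f (fst (snd t)) - f (snd (snd t))\<bar>" for t :: "'a \<times> 'a \<times> 'a"
  have c1: "cost p f \<gamma>1 = (\<integral>\<^sup>+t. ennreal (F t powr p) \<partial>measure_pmf \<tau>)"
    unfolding cost_def t1[symmetric] F_def by (simp add: case_prod_beta)
  have c2: "cost p f \<gamma>2 = (\<integral>\<^sup>+t. ennreal (G t powr p) \<partial>measure_pmf \<tau>)"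
    unfolding cost_def t2[symmetric] G_def by (simp add: case_prod_beta)
  have fin1: "cost p f \<gamma>1 < \<infinity>" by (rule cost_finite[OF coup_finite[OF g1 f1 f2]])
  have fin2: "cost p f \<gamma>2 < \<infinity>" by (rule cost_finite[OF coup_finite[OF g2 f2 f3]])
  have fin3: "cost p f \<gamma>3 < \<infinity>" by (rule cost_finite[OF coup_finite[OF g3 f1 f3]])
  have "cost p f \<gamma>3 = (\<integral>\<^sup>+t. ennreal (\<bar>f (fst t) - f (snd (snd t))\<bar> powr p) \<partial>measure_pmf \<tau>)"
    unfolding cost_def \<gamma>3_def by (simp add: case_prod_beta)
  also have "\<dots> \<le> (\<integral>\<^sup>+t. ennreal ((F t + G t) powr p) \<partial>measure_pmf \<tau>)"
    unfolding F_def G_def using p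
    by (intro nn_integral_mono ennreal_leI powr_mono2) auto
  also have "\<dots> \<le> ennreal ((enn2real (cost p f \<gamma>1) powr (1/p) + enn2real (cost p f \<gamma>2) powr (1/p)) powr p)"
    unfolding c1 c2 using fin1 fin2 unfolding c1 c2
    by (intro minkowski_nn[OF p]) (auto simp: F_def G_def)
  finally have le: "cost p f \<gamma>3 \<le> ennreal ((enn2real (cost p f \<gamma>1) powr (1/p) + enn2real (cost p f \<gamma>2) powr (1/p)) powr p)" .
  have "enn2real (CW p f G1 G3) \<le> enn2real (cost p f \<gamma>3)"
    using CW_le_cost[OF g3] fin3 by (intro enn2real_mono) auto
  also have "\<dots> \<le> (enn2real (cost p f \<gamma>1) powr (1/p) + enn2real (cost p f \<gamma>2) powr (1/p)) powr p"
    using le by (metis enn2real_ennreal enn2real_mono ennreal_less_top powr_ge_zero)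
  finally have "enn2real (CW p f G1 G3) powr (1/p) \<le> ((enn2real (cost p f \<gamma>1) powr (1/p) + enn2real (cost p f \<gamma>2) powr (1/p)) powr p) powr (1/p)"
    using p by (intro powr_mono2) auto
  also have "\<dots> = enn2real (cost p f \<gamma>1) powr (1/p) + enn2real (cost p f \<gamma>2) powr (1/p)"
    using p by (simp add: powr_powr)
  finally show ?thesis .
qed

lemma CW_triangle:
  assumes p: "p \<ge> 1" and f1: "finite (set_pmf G1)" and f2: "finite (set_pmf G2)" and f3: "finite (set_pmf G3)"
  shows "enn2real (CW p f G1 G3) powr (1/p) \<le> enn2real (CW p f G1 G2) powr (1/p) + enn2real (CW p f G2 G3) powr (1/p)"
proof (rule ccontr)
  define a where "a = enn2real (CW p f G1 G3) powr (1/p)"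
  define s where "s = enn2real (CW p f G1 G2) powr (1/p)"
  define t where "t = enn2real (CW p f G2 G3) powr (1/p)"
  assume "\<not> ?thesis"
  then have gt: "a > s + t" unfolding a_def s_def t_def by simp
  define d where "d = (a - s - t) / 3"
  have d: "d > 0" using gt unfolding d_def by simp
  have s0: "s \<ge> 0" "t \<ge> 0" unfolding s_def t_def by auto
  have ex: "\<exists>\<gamma>\<in>coup H1 H2. enn2real (cost p f \<gamma>) powr (1/p) < u + d"
    if fin: "finite (set_pmf H1)" "finite (set_pmf H2)" and u: "u = enn2real (CW p f H1 H2) powr (1/p)"
    for H1 H2 u
  proof -
    have u0: "u \<ge> 0" using u by auto
    have CWu: "CW p f H1 H2 = ennreal (u powr p)"
      using u p CW_finite[OF fin, of p f] by (simp add: powr_powr ennreal_enn2real_if less_top[symmetric])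
    have "u powr p < (u + d) powr p" using u0 d p by (intro powr_less_mono2) auto
    then have "CW p f H1 H2 < ennreal ((u + d) powr p)" unfolding CWu
      using u0 d by (subst ennreal_less_iff) auto
    then obtain \<gamma> where g: "\<gamma> \<in> coup H1 H2" and lt: "cost p f \<gamma> < ennreal ((u + d) powr p)"
      unfolding CW_def by (auto simp: INF_less_iff)
    have "enn2real (cost p f \<gamma>) < (u + d) powr p"
      using lt by (cases "cost p f \<gamma>") (auto simp: ennreal_less_iff)
    then have "enn2real (cost p f \<gamma>) powr (1/p) < ((u + d) powr p) powr (1/p)"
      using p by (intro powr_less_mono2) auto
    also have "\<dots> = u + d" using p u0 d by (simp add: powr_powr)
    finally show ?thesis using g by blast
  qed
  obtain \<gamma>1 where g1: "\<gamma>1 \<in> coup G1 G2" and l1: "enn2real (cost p f \<gamma>1) powr (1/p) < s + d"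
    using ex[OF f1 f2 s_def] by blast
  obtain \<gamma>2 where g2: "\<gamma>2 \<in> coup G2 G3" and l2: "enn2real (cost p f \<gamma>2) powr (1/p) < t + d"
    using ex[OF f2 f3 t_def] by blast
  have "a \<le> enn2real (cost p f \<gamma>1) powr (1/p) + enn2real (cost p f \<gamma>2) powr (1/p)"
    unfolding a_def by (rule cost_tri[OF p f1 f2 f3 g1 g2])
  moreover have "3 * d = a - s - t" using d_def by simp
  ultimately show False using l1 l2 d by linarith
qed

lemma CW_zero:
  assumes p: "p > 0" and f1: "finite (set_pmf G1)" and f2: "finite (set_pmf G2)"
    and z: "CW p f G1 G2 = 0"
  shows "map_pmf f G1 = map_pmf f G2"
proof (rule ccontr)
  assume "map_pmf f G1 \<noteq> map_pmf f G2"
  then obtain a where pa: "pmf (map_pmf f G1) a \<noteq> pmf (map_pmf f G2) a" using pmf_eqI by meson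
  define \<eta> where "\<eta> = \<bar>pmf (map_pmf f G1) a - pmf (map_pmf f G2) a\<bar>"
  have eta: "\<eta> > 0" using pa unfolding \<eta>_def by simp
  define S where "S = f ` (set_pmf G1 \<union> set_pmf G2)"
  have Sf: "finite S" using f1 f2 unfolding S_def by simp
  define D where "D = (\<lambda>(a,b). \<bar>a - b\<bar> powr p) ` {ab\<in>S\<times>S. fst ab \<noteq> snd ab}"
  have Df: "finite D" unfolding D_def using Sf by (intro finite_imageI) (auto intro: finite_subset[of _ "S \<times> S"])
  define m where "m = Min (insert 1 D)"
  have m0: "m > 0" unfolding m_def using Df by (subst Min_gr_iff) (auto simp: D_def)
  have mle: "m \<le> \<bar>x - y\<bar> powr p" if "x \<in> S" "y \<in> S" "x \<noteq> y" for x y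
  proof -
    have "\<bar>x - y\<bar> powr p \<in> D" unfolding D_def using that by (auto intro!: image_eqI[of _ _ "(x,y)"])
    then show ?thesis unfolding m_def using Df by (intro Min_le) auto
  qed
  define E where "E = {xy. f (fst xy) \<noteq> f (snd xy)}"
  have bound: "ennreal (m * \<eta>) \<le> cost p f \<gamma>" if g: "\<gamma> \<in> coup G1 G2" for \<gamma>
  proof -
    have m1: "map_pmf (\<lambda>xy. f (fst xy)) \<gamma> = map_pmf f G1" "map_pmf (\<lambda>xy. f (snd xy)) \<gamma> = map_pmf f G2"
      using g unfolding coup_def by (auto simp: map_pmf_comp)
    define A1 where "A1 = {xy :: 'a \<times> 'a. f (fst xy) = a}"
    define A2 where "A2 = {xy :: 'a \<times> 'a. f (snd xy) = a}"
    have pA1: "pmf (map_pmf f G1) a = measure \<gamma> A1" unfolding m1(1)[symmetric] A1_def pmf_map by (simp add: vimage_def)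
    have pA2: "pmf (map_pmf f G2) a = measure \<gamma> A2" unfolding m1(2)[symmetric] A2_def pmf_map by (simp add: vimage_def)
    have "measure \<gamma> A1 \<le> measure \<gamma> (A2 \<union> E)" by (intro measure_pmf.finite_measure_mono) (auto simp: A1_def A2_def E_def)
    also have "\<dots> \<le> measure \<gamma> A2 + measure \<gamma> E" by (rule measure_Un_le) auto
    finally have i1: "measure \<gamma> A1 \<le> measure \<gamma> A2 + measure \<gamma> E" .
    have "measure \<gamma> A2 \<le> measure \<gamma> (A1 \<union> E)" by (intro measure_pmf.finite_measure_mono) (auto simp: A1_def A2_def E_def)
    also have "\<dots> \<le> measure \<gamma> A1 + measure \<gamma> E" by (rule measure_Un_le) auto
    finally have i2: "measure \<gamma> A2 \<le> measure \<gamma> A1 + measure \<gamma> E" .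
    have etaE: "\<eta> \<le> measure \<gamma> E" using i1 i2 unfolding \<eta>_def pA1 pA2 by linarith
    have "ennreal (m * \<eta>) \<le> ennreal (m * measure \<gamma> E)" using m0 etaE by (intro ennreal_leI mult_left_mono) auto
    also have "\<dots> = (\<integral>\<^sup>+xy. ennreal m * indicator E xy \<partial>measure_pmf \<gamma>)"
      using m0 by (simp add: nn_integral_cmult_indicator measure_pmf.emeasure_eq_measure ennreal_mult)
    also have "\<dots> \<le> cost p f \<gamma>" unfolding cost_def
    proof (intro nn_integral_mono_AE, unfold AE_measure_pmf_iff, intro ballI)
      fix xy assume xy: "xy \<in> set_pmf \<gamma>"
      then have "fst xy \<in> set_pmf G1" "snd xy \<in> set_pmf G2" using coup_set[OF g] by auto
      then have inS: "f (fst xy) \<in> S" "f (snd xy) \<in> S" unfolding S_def by auto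
      show "ennreal m * indicator E xy \<le> ennreal (\<bar>f (fst xy) - f (snd xy)\<bar> powr p)"
      proof (cases "xy \<in> E")
        case True
        then show ?thesis using mle[OF inS] by (simp add: E_def ennreal_leI)
      qed simp
    qed
    finally show ?thesis .
  qed
  have "ennreal (m * \<eta>) \<le> CW p f G1 G2" unfolding CW_def by (rule INF_greatest) (rule bound)
  then show False using z m0 eta by simp
qed

lemma nn_integral_finite_supp:
  fixes h :: "'b \<Rightarrow> ennreal"
  assumes F: "finite F" "F \<in> sets M" and sing: "\<And>z. z \<in> F \<Longrightarrow> {z} \<in> sets M"
    and null: "emeasure M (space M - F) = 0"
  shows "(\<integral>\<^sup>+z. h z \<partial>M) = (\<Sum>z\<in>F. h z * emeasure M {z})"
proof -
  have "AE z in M. z \<in> F"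
    by (rule AE_I'[of "space M - F"]) (use null F in \<open>auto simp: null_sets_def\<close>)
  then have "(\<integral>\<^sup>+z. h z \<partial>M) = (\<integral>\<^sup>+z. h z * indicator F z \<partial>M)"
    by (intro nn_integral_cong_AE) (auto elim!: AE_mp)
  also have "\<dots> = (\<Sum>z\<in>F. h z * emeasure M {z})"
    using F sing by (intro nn_integral_indicator_finite) auto
  finally show ?thesis .
qed

lemma fst_borel: "fst \<in> borel_measurable (borel :: (real \<times> real) measure)"
  by (intro borel_measurable_continuous_onI continuous_intros)
lemma snd_borel: "snd \<in> borel_measurable (borel :: (real \<times> real) measure)"
  by (intro borel_measurable_continuous_onI continuous_intros)

lemma cost_borel: "(\<lambda>xy::real\<times>real. ennreal (\<bar>fst xy - snd xy\<bar> powr p)) \<in> borel_measurable borel"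
  using fst_borel snd_borel by measurable

lemma distr_pmf_comp:
  "distr (measure_pmf (map_pmf g M)) borel f = distr (measure_pmf M) borel (\<lambda>x. f (g x))"
  unfolding map_pmf_rep_eq by (subst distr_distr) (auto simp: comp_def)

lemma Wpp_le_CW:
  fixes f :: "'a \<Rightarrow> real"
  shows "Wpp p (distr (measure_pmf G1) borel f) (distr (measure_pmf G2) borel f) \<le> CW p f G1 G2"
  unfolding CW_def Wpp_def
proof (rule INF_greatest)
  fix \<gamma> assume g: "\<gamma> \<in> coup G1 G2"
  define g where "g xy = (f (fst xy), f (snd xy))" for xy
  define \<pi> where "\<pi> = distr (measure_pmf \<gamma>) borel g"
  have gm: "g \<in> measurable (measure_pmf \<gamma>) borel" by simp
  have ps: "prob_space \<pi>" unfolding \<pi>_def by (rule measure_pmf.prob_space_distr) simp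
  have s: "sets \<pi> = sets borel" unfolding \<pi>_def by simp
  have d1: "distr \<pi> borel fst = distr (measure_pmf G1) borel f"
    unfolding \<pi>_def using g unfolding coup_def
    by (subst distr_distr[OF fst_borel gm]) (auto simp: distr_pmf_comp comp_def g_def)
  have d2: "distr \<pi> borel snd = distr (measure_pmf G2) borel f"
    unfolding \<pi>_def using g unfolding coup_def
    by (subst distr_distr[OF snd_borel gm]) (auto simp: distr_pmf_comp comp_def g_def)
  have c: "(\<integral>\<^sup>+ xy. ennreal (\<bar>fst xy - snd xy\<bar> powr p) \<partial>\<pi>) = cost p f \<gamma>"
    unfolding \<pi>_def cost_def by (subst nn_integral_distr[OF gm]) (auto simp: g_def cost_borel)
  show "(INF \<pi> \<in> {\<pi> :: (real \<times> real) measure. prob_space \<pi> \<and> sets \<pi> = sets borel \<and>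
        distr \<pi> borel fst = distr (measure_pmf G1) borel f \<and> distr \<pi> borel snd = distr (measure_pmf G2) borel f}.
      \<integral>\<^sup>+ xy. ennreal (\<bar>fst xy - snd xy\<bar> powr p) \<partial>\<pi>) \<le> cost p f \<gamma>"
    using ps s d1 d2 c by (intro INF_lower2[of \<pi>]) auto
qed

lemma CW_le_Wpp:
  fixes f :: "'a \<Rightarrow> real"
  assumes f1: "finite (set_pmf G1)" and f2: "finite (set_pmf G2)"
  shows "CW p f G1 G2 \<le> Wpp p (distr (measure_pmf G1) borel f) (distr (measure_pmf G2) borel f)"
  unfolding Wpp_def
proof (rule INF_greatest, safe)
  fix \<pi> :: "(real \<times> real) measure"
  assume ps: "prob_space \<pi>" and s: "sets \<pi> = sets borel"
    and d1: "distr \<pi> borel fst = distr (measure_pmf G1) borel f"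
    and d2: "distr \<pi> borel snd = distr (measure_pmf G2) borel f"
  interpret P: prob_space \<pi> by fact
  have sp: "space \<pi> = UNIV" using sets_eq_imp_space_eq[OF s] by simp
  have fstm: "fst \<in> measurable \<pi> borel" using fst_borel measurable_cong_sets[OF s refl] by blast
  have sndm: "snd \<in> measurable \<pi> borel" using snd_borel measurable_cong_sets[OF s refl] by blast
  define A where "A = f ` set_pmf G1"
  define B where "B = f ` set_pmf G2"
  define F where "F = A \<times> B"
  have Ff: "finite F" unfolding F_def A_def B_def using f1 f2 by simp
  have bor: "S \<in> sets \<pi>" if "S \<in> sets borel" for S using that s by simp
  have FS: "F \<in> sets \<pi>" by (rule bor) (intro borel_closed finite_imp_closed Ff)
  have sing: "{z} \<in> sets \<pi>" for z by (rule bor) simp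
  have cF: "space \<pi> - F \<in> sets \<pi>" using FS by auto
  have A_closed: "A \<in> sets borel" unfolding A_def using f1 by (intro borel_closed finite_imp_closed) simp
  have B_closed: "B \<in> sets borel" unfolding B_def using f2 by (intro borel_closed finite_imp_closed) simp
  have n1: "emeasure \<pi> (fst -` (UNIV - A)) = 0"
  proof -
    have "emeasure \<pi> (fst -` (UNIV - A)) = emeasure (distr \<pi> borel fst) (UNIV - A)"
      using fstm A_closed by (subst emeasure_distr) (auto simp: sp)
    also have "\<dots> = emeasure (measure_pmf G1) (f -` (UNIV - A))"
      unfolding d1 using A_closed by (subst emeasure_distr) auto
    also have "\<dots> = 0" by (rule in_null_sets_measure_pmfI[THEN null_setsD1]) (auto simp: A_def)
    finally show ?thesis .
  qed
  have n2: "emeasure \<pi> (snd -` (UNIV - B)) = 0"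
  proof -
    have "emeasure \<pi> (snd -` (UNIV - B)) = emeasure (distr \<pi> borel snd) (UNIV - B)"
      using sndm B_closed by (subst emeasure_distr) (auto simp: sp)
    also have "\<dots> = emeasure (measure_pmf G2) (f -` (UNIV - B))"
      unfolding d2 using B_closed by (subst emeasure_distr) auto
    also have "\<dots> = 0" by (rule in_null_sets_measure_pmfI[THEN null_setsD1]) (auto simp: B_def)
    finally show ?thesis .
  qed
  have m1: "fst -` (UNIV - A) \<in> sets \<pi>" using measurable_sets[OF fstm, of "UNIV - A"] A_closed sp by auto
  have m2: "snd -` (UNIV - B) \<in> sets \<pi>" using measurable_sets[OF sndm, of "UNIV - B"] B_closed sp by auto
  have null: "emeasure \<pi> (space \<pi> - F) = 0"
  proof -
    have "emeasure \<pi> (space \<pi> - F) \<le> emeasure \<pi> (fst -` (UNIV - A) \<union> snd -` (UNIV - B))"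
      using m1 m2 by (intro emeasure_mono) (auto simp: F_def sp)
    also have "\<dots> \<le> emeasure \<pi> (fst -` (UNIV - A)) + emeasure \<pi> (snd -` (UNIV - B))"
      using m1 m2 by (rule emeasure_subadditive)
    finally show ?thesis using n1 n2 by simp
  qed
  have intF: "(\<integral>\<^sup>+z. h z \<partial>\<pi>) = (\<Sum>z\<in>F. h z * emeasure \<pi> {z})" for h
    by (rule nn_integral_finite_supp[OF Ff FS sing null])
  define r where "r z = measure \<pi> {z}" for z
  have r0: "\<And>z. z \<notin> F \<Longrightarrow> r z = 0"
  proof -
    fix z assume "z \<notin> F"
    then have "emeasure \<pi> {z} \<le> emeasure \<pi> (space \<pi> - F)" using cF \<open>z \<notin> F\<close> by (intro emeasure_mono) (auto simp: sp)
    then show "r z = 0" using null unfolding r_def by (simp add: P.emeasure_eq_measure measure_le_0_iff)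
  qed
  have rsum: "(\<integral>\<^sup>+z. ennreal (r z) \<partial>count_space UNIV) = 1"
  proof -
    have "(\<integral>\<^sup>+z. ennreal (r z) \<partial>count_space UNIV) = (\<Sum>z\<in>F. ennreal (r z))"
      using Ff r0 by (intro nn_integral_count_space') auto
    also have "\<dots> = (\<Sum>z\<in>F. 1 * emeasure \<pi> {z})" unfolding r_def by (simp add: P.emeasure_eq_measure)
    also have "\<dots> = (\<integral>\<^sup>+z. 1 \<partial>\<pi>)" using intF[of "\<lambda>_. 1"] by simp
    also have "\<dots> = 1" using P.emeasure_space_1 by simp
    finally show ?thesis .
  qed
  have rnn: "\<And>z. 0 \<le> r z" unfolding r_def by simp
  define \<rho> where "\<rho> = embed_pmf r"
  have pr: "pmf \<rho> z = r z" for z unfolding \<rho>_def by (rule pmf_embed_pmf[OF rnn rsum])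
  have setr: "set_pmf \<rho> \<subseteq> F"
  proof
    fix z assume "z \<in> set_pmf \<rho>"
    then have "r z \<noteq> 0" using pr[of z] set_pmf_iff[of z \<rho>] by simp
    then show "z \<in> F" using r0 by blast
  qed
  have emr: "emeasure (measure_pmf \<rho>) {z} = emeasure \<pi> {z}" for z
    unfolding emeasure_pmf_single pr r_def P.emeasure_eq_measure ..
  have nullr: "emeasure (measure_pmf \<rho>) (space (measure_pmf \<rho>) - F) = 0"
    by (rule in_null_sets_measure_pmfI[THEN null_setsD1]) (use setr in auto)
  have intr: "(\<integral>\<^sup>+z. h z \<partial>measure_pmf \<rho>) = (\<Sum>z\<in>F. h z * emeasure \<pi> {z})" for h
    by (subst nn_integral_finite_supp[OF Ff _ _ nullr]) (auto simp: emr)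
  have emeq: "emeasure (measure_pmf \<rho>) S = emeasure \<pi> S" if "S \<in> sets borel" for S
  proof -
    have "emeasure (measure_pmf \<rho>) S = (\<integral>\<^sup>+z. indicator S z \<partial>measure_pmf \<rho>)" by simp
    also have "\<dots> = (\<integral>\<^sup>+z. indicator S z \<partial>\<pi>)" unfolding intr intF ..
    also have "\<dots> = emeasure \<pi> S" using bor[OF that] by simp
    finally show ?thesis .
  qed
  have meq: "measure (measure_pmf \<rho>) S = measure \<pi> S" if "S \<in> sets borel" for S
    using emeq[OF that] by (simp add: measure_def)
  have mf: "map_pmf fst \<rho> = map_pmf f G1"
  proof (rule pmf_eqI)
    fix a
    have cl: "fst -` {a} \<in> sets (borel :: (real \<times> real) measure)"
      using measurable_sets[OF fst_borel, of "{a}"] by simp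
    have "pmf (map_pmf fst \<rho>) a = measure \<pi> (fst -` {a})" unfolding pmf_map using meq[OF cl] .
    also have "\<dots> = measure (distr \<pi> borel fst) {a}" using fstm by (subst measure_distr) (auto simp: sp)
    also have "\<dots> = measure (measure_pmf G1) (f -` {a})" unfolding d1 by (subst measure_distr) auto
    finally show "pmf (map_pmf fst \<rho>) a = pmf (map_pmf f G1) a" by (simp add: pmf_map)
  qed
  have ms: "map_pmf snd \<rho> = map_pmf f G2"
  proof (rule pmf_eqI)
    fix a
    have cl: "snd -` {a} \<in> sets (borel :: (real \<times> real) measure)"
      using measurable_sets[OF snd_borel, of "{a}"] by simp
    have "pmf (map_pmf snd \<rho>) a = measure \<pi> (snd -` {a})" unfolding pmf_map using meq[OF cl] .
    also have "\<dots> = measure (distr \<pi> borel snd) {a}" using sndm by (subst measure_distr) (auto simp: sp)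
    also have "\<dots> = measure (measure_pmf G2) (f -` {a})" unfolding d2 by (subst measure_distr) auto
    finally show "pmf (map_pmf snd \<rho>) a = pmf (map_pmf f G2) a" by (simp add: pmf_map)
  qed
  have ne1: "set_pmf G1 \<inter> {x. f x = fst ab} \<noteq> {}" if "ab \<in> set_pmf \<rho>" for ab
  proof -
    have "fst ab \<in> set_pmf (map_pmf fst \<rho>)" using that by simp
    then show ?thesis unfolding mf by auto
  qed
  have ne2: "set_pmf G2 \<inter> {x. f x = snd ab} \<noteq> {}" if "ab \<in> set_pmf \<rho>" for ab
  proof -
    have "snd ab \<in> set_pmf (map_pmf snd \<rho>)" using that by simp
    then show ?thesis unfolding ms by auto
  qed
  define \<gamma> where "\<gamma> = bind_pmf \<rho> (\<lambda>ab. pair_pmf (cond_pmf G1 {x. f x = fst ab}) (cond_pmf G2 {x. f x = snd ab}))"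
  have cancel1: "bind_pmf G1 (\<lambda>x. cond_pmf G1 {y. f y = f x}) = G1"
    by (rule bind_cond_pmf_cancel) (auto intro!: arg_cong[where f="measure (measure_pmf G1)"])
  have cancel2: "bind_pmf G2 (\<lambda>x. cond_pmf G2 {y. f y = f x}) = G2"
    by (rule bind_cond_pmf_cancel) (auto intro!: arg_cong[where f="measure (measure_pmf G2)"])
  have "map_pmf fst \<gamma> = bind_pmf \<rho> (\<lambda>ab. cond_pmf G1 {x. f x = fst ab})"
    unfolding \<gamma>_def map_bind_pmf map_fst_pair_pmf ..
  also have "\<dots> = bind_pmf (map_pmf fst \<rho>) (\<lambda>a. cond_pmf G1 {x. f x = a})" by (simp add: bind_map_pmf)
  also have "\<dots> = G1" unfolding mf bind_map_pmf by (rule cancel1)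
  finally have gf: "map_pmf fst \<gamma> = G1" .
  have "map_pmf snd \<gamma> = bind_pmf \<rho> (\<lambda>ab. cond_pmf G2 {x. f x = snd ab})"
    unfolding \<gamma>_def map_bind_pmf map_snd_pair_pmf ..
  also have "\<dots> = bind_pmf (map_pmf snd \<rho>) (\<lambda>a. cond_pmf G2 {x. f x = a})" by (simp add: bind_map_pmf)
  also have "\<dots> = G2" unfolding ms bind_map_pmf by (rule cancel2)
  finally have gs: "map_pmf snd \<gamma> = G2" .
  have gc: "\<gamma> \<in> coup G1 G2" using gf gs by (simp add: coup_def)
  have mg: "map_pmf (\<lambda>xy. (f (fst xy), f (snd xy))) \<gamma> = \<rho>"
  proof -
    have "map_pmf (\<lambda>xy. (f (fst xy), f (snd xy))) \<gamma> = bind_pmf \<rho> return_pmf"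
      unfolding \<gamma>_def map_bind_pmf
    proof (intro bind_pmf_cong refl)
      fix ab assume ab: "ab \<in> set_pmf \<rho>"
      show "map_pmf (\<lambda>xy. (f (fst xy), f (snd xy))) (pair_pmf (cond_pmf G1 {x. f x = fst ab}) (cond_pmf G2 {x. f x = snd ab}))
            = return_pmf ab"
        unfolding map_pmf_eq_return_pmf_iff using set_cond_pmf[OF ne1[OF ab]] set_cond_pmf[OF ne2[OF ab]]
        by auto
    qed
    then show ?thesis by (simp add: bind_return_pmf')
  qed
  have "cost p f \<gamma> = (\<integral>\<^sup>+z. ennreal (\<bar>fst z - snd z\<bar> powr p) \<partial>measure_pmf (map_pmf (\<lambda>xy. (f (fst xy), f (snd xy))) \<gamma>))"
    unfolding cost_def by simp
  also have "\<dots> = (\<integral>\<^sup>+z. ennreal (\<bar>fst z - snd z\<bar> powr p) \<partial>\<pi>)" unfolding mg intr intF ..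
  finally have "cost p f \<gamma> = (\<integral>\<^sup>+z. ennreal (\<bar>fst z - snd z\<bar> powr p) \<partial>\<pi>)" .
  then show "CW p f G1 G2 \<le> (\<integral>\<^sup>+xy. ennreal (\<bar>fst xy - snd xy\<bar> powr p) \<partial>\<pi>)"
    using CW_le_cost[OF gc, of p f] by simp
qed

lemma Wpp_CW:
  fixes f :: "'a \<Rightarrow> real"
  assumes "finite (set_pmf G1)" "finite (set_pmf G2)"
  shows "Wpp p (distr (measure_pmf G1) borel f) (distr (measure_pmf G2) borel f) = CW p f G1 G2"
  using Wpp_le_CW CW_le_Wpp[OF assms] by (rule antisym)

lemma nrm_meas: "(\<lambda>x::'a::euclidean_space. x /\<^sub>R norm x) \<in> borel_measurable borel"
  by measurable

lemma lborel_ball_pos: "r > 0 \<Longrightarrow> emeasure lborel (ball (c::'a::euclidean_space) r) > 0"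
proof -
  assume r: "r > 0"
  have "emeasure lborel (ball c r) = ennreal (measure lborel (ball c r))"
    using emeasure_lborel_ball_finite[of c r] by (intro emeasure_eq_ennreal_measure) simp
  then show ?thesis using content_ball_pos[OF r, of c] by simp
qed

lemma unif_sphere_sets[simp]: "sets (unif_sphere :: 'a::euclidean_space measure) = sets borel"
  by (simp add: unif_sphere_def)

lemma unif_sphere_space[simp]: "space (unif_sphere :: 'a::euclidean_space measure) = UNIV"
  by (simp add: unif_sphere_def)

lemma U_prob: "prob_space (uniform_measure lborel (ball (0::'a::euclidean_space) 1))"
  by (rule prob_space_uniform_measure) (use lborel_ball_pos[of 1 "0::'a"] emeasure_lborel_ball_finite[of "0::'a" 1] in auto)

lemma nrm_meas_U: "(\<lambda>x::'a::euclidean_space. x /\<^sub>R norm x) \<in> measurable (uniform_measure lborel (ball 0 1)) borel"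
proof -
  have "measurable (uniform_measure lborel (ball (0::'a) 1)) borel = measurable borel borel"
    by (rule measurable_cong_sets) simp_all
  then show ?thesis using nrm_meas by simp
qed

lemma unif_sphere_prob: "prob_space (unif_sphere :: 'a::euclidean_space measure)"
  unfolding unif_sphere_def by (rule prob_space.prob_space_distr[OF U_prob nrm_meas_U])

lemma unif_sphere_AE: "AE x in (unif_sphere :: 'a::euclidean_space measure). norm x = 1"
  unfolding unif_sphere_def
proof (subst AE_distr_iff[OF nrm_meas_U])
  show "{x \<in> space borel. norm (x::'a) = 1} \<in> sets borel" by measurable
  show "AE x in uniform_measure lborel (ball 0 1). norm ((x::'a) /\<^sub>R norm x) = (1::real)"
  proof (rule AE_uniform_measureI)
    show "ball 0 1 \<in> sets lborel" by simp
    show "AE x in lborel. x \<in> ball 0 1 \<longrightarrow> norm ((x::'a) /\<^sub>R norm x) = (1::real)"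
      by (rule AE_mp[OF AE_lborel_singleton[of "0::'a"]]) (rule AE_I2, simp)
  qed
qed

lemma unif_sphere_ball_pos:
  fixes x0 :: "'a::euclidean_space"
  assumes x0: "norm x0 = 1" and r: "r > 0"
  shows "emeasure unif_sphere (ball x0 r) > 0"
proof -
  define s where "s = min (1/4) (r/8)"
  have s: "s > 0" "s \<le> 1/4" "4 * s < r" using r unfolding s_def by auto
  have sub: "ball (x0 /\<^sub>R 2) s \<subseteq> ball 0 1 \<inter> ((\<lambda>x. x /\<^sub>R norm x) -` ball x0 r)"
  proof
    fix x assume "x \<in> ball (x0 /\<^sub>R 2) s"
    then have d: "norm (x - x0 /\<^sub>R 2) < s" by (simp add: dist_norm norm_minus_commute)
    have nx: "\<bar>norm x - 1/2\<bar> \<le> norm (x - x0 /\<^sub>R 2)"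
      using norm_triangle_ineq3[of x "x0 /\<^sub>R 2"] x0 by simp
    then have nx1: "norm x < 1" "norm x > 1/4" using d s by auto
    have "norm (x /\<^sub>R norm x - x0) \<le> norm (x /\<^sub>R norm x - 2 *\<^sub>R x) + norm (2 *\<^sub>R x - x0)"
      using norm_triangle_ineq[of "x /\<^sub>R norm x - 2 *\<^sub>R x" "2 *\<^sub>R x - x0"] by simp
    also have "norm (x /\<^sub>R norm x - 2 *\<^sub>R x) = \<bar>1 - 2 * norm x\<bar>"
    proof -
      have "x /\<^sub>R norm x - 2 *\<^sub>R x = (1 / norm x - 2) *\<^sub>R x" by (simp add: scaleR_diff_left divide_inverse)
      then have "norm (x /\<^sub>R norm x - 2 *\<^sub>R x) = \<bar>1 / norm x - 2\<bar> * norm x" by simp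
      also have "\<dots> = \<bar>(1 / norm x - 2) * norm x\<bar>" by (simp add: abs_mult)
      also have "(1 / norm x - 2) * norm x = 1 - 2 * norm x" using nx1 by (auto simp: field_simps)
      finally show ?thesis .
    qed
    also have "norm (2 *\<^sub>R x - x0) = 2 * norm (x - x0 /\<^sub>R 2)"
    proof -
      have "2 *\<^sub>R x - x0 = 2 *\<^sub>R (x - x0 /\<^sub>R 2)" by (simp add: algebra_simps)
      then show ?thesis by simp
    qed
    finally have "norm (x /\<^sub>R norm x - x0) \<le> \<bar>1 - 2 * norm x\<bar> + 2 * norm (x - x0 /\<^sub>R 2)" .
    moreover have "\<bar>1 - 2 * norm x\<bar> \<le> 2 * norm (x - x0 /\<^sub>R 2)" using nx by linarith
    ultimately have "norm (x /\<^sub>R norm x - x0) < r" using d s by linarith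
    then show "x \<in> ball 0 1 \<inter> ((\<lambda>x. x /\<^sub>R norm x) -` ball x0 r)"
      using nx1 by (simp add: dist_norm norm_minus_commute)
  qed
  have pre: "(\<lambda>x. x /\<^sub>R norm x) -` ball x0 r \<inter> space (uniform_measure lborel (ball (0::'a) 1))
      = (\<lambda>x. x /\<^sub>R norm x) -` ball x0 r" by simp
  have m: "(\<lambda>x::'a. x /\<^sub>R norm x) -` ball x0 r \<in> sets lborel"
    using measurable_sets[OF nrm_meas, of "ball x0 r"] by simp
  have "emeasure unif_sphere (ball x0 r) =
      emeasure lborel (ball 0 1 \<inter> ((\<lambda>x. x /\<^sub>R norm x) -` ball x0 r)) / emeasure lborel (ball (0::'a) 1)"
    unfolding unif_sphere_def
    by (subst emeasure_distr[OF nrm_meas_U]) (use m in \<open>auto simp: pre\<close>)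
  moreover have "emeasure lborel (ball 0 1 \<inter> ((\<lambda>x. x /\<^sub>R norm x) -` ball x0 r)) > 0"
    using lborel_ball_pos[OF s(1), of "x0 /\<^sub>R 2"] emeasure_mono[OF sub, of lborel] m
    by (auto simp: less_le_trans)
  ultimately show ?thesis
    using emeasure_lborel_ball_finite[of "0::'a" 1]
    by (simp add: ennreal_zero_less_divide)
qed

definition quadf :: "('a::real_vector \<Rightarrow> real) \<Rightarrow> bool" where
  "quadf q \<longleftrightarrow> (\<forall>v u. \<exists>b. \<forall>t. q (v + t *\<^sub>R u) = q v + b * t + q u * t\<^sup>2)"

lemma quad_roots_finite:
  fixes a b c :: real
  assumes "a \<noteq> 0 \<or> c \<noteq> 0"
  shows "finite {t. a + b * t + c * t\<^sup>2 = 0}"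
proof -
  have "[:a, b, c:] \<noteq> 0" using assms by auto
  then have "finite {t. poly [:a, b, c:] t = 0}" by (rule poly_roots_finite)
  moreover have "poly [:a, b, c:] t = a + b * t + c * t\<^sup>2" for t by (simp add: algebra_simps power2_eq_square)
  ultimately show ?thesis by (simp add: add.assoc)
qed

lemma avoid_zeros:
  fixes q :: "'i \<Rightarrow> 'a::real_vector \<Rightarrow> real"
  assumes "finite I" "\<And>i. i \<in> I \<Longrightarrow> quadf (q i)" "\<And>i. i \<in> I \<Longrightarrow> \<exists>u. q i u \<noteq> 0"
  shows "\<exists>v. \<forall>i\<in>I. q i v \<noteq> 0"
  using assms
proof (induction I rule: finite_induct)
  case empty
  then show ?case by simp
next
  case (insert j I)
  then obtain v0 where v0: "\<forall>i\<in>I. q i v0 \<noteq> 0" by auto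
  obtain u where u: "q j u \<noteq> 0" using insert.prems by auto
  have fin: "finite {t. q i (v0 + t *\<^sub>R u) = 0}" if i: "i \<in> insert j I" for i
  proof -
    obtain b where b: "\<And>t. q i (v0 + t *\<^sub>R u) = q i v0 + b * t + q i u * t\<^sup>2"
      using insert.prems(1)[OF i] unfolding quadf_def by blast
    have "q i v0 \<noteq> 0 \<or> q i u \<noteq> 0" using i v0 u by auto
    then have "finite {t. q i v0 + b * t + q i u * t\<^sup>2 = 0}" by (rule quad_roots_finite)
    then show ?thesis by (simp add: b)
  qed
  have "finite (\<Union>i\<in>insert j I. {t. q i (v0 + t *\<^sub>R u) = 0})"
    using fin insert.hyps(1) by blast
  then obtain t where "t \<notin> (\<Union>i\<in>insert j I. {t. q i (v0 + t *\<^sub>R u) = 0})"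
    using ex_new_if_finite[OF infinite_UNIV_char_0] by blast
  then show ?case by blast
qed

lemma quadf_inner_sq: "quadf (\<lambda>v. (a \<bullet> v)\<^sup>2)"
  unfolding quadf_def
proof (intro allI)
  fix v u
  show "\<exists>b. \<forall>t. (a \<bullet> (v + t *\<^sub>R u))\<^sup>2 = (a \<bullet> v)\<^sup>2 + b * t + (a \<bullet> u)\<^sup>2 * t\<^sup>2"
    by (rule exI[of _ "2 * (a \<bullet> v) * (a \<bullet> u)"]) (simp add: inner_add_right power2_eq_square algebra_simps)
qed

lemma quadf_matrix: "quadf (\<lambda>v::real^'n. v \<bullet> (D *v v))"
  unfolding quadf_def
proof (intro allI)
  fix v u :: "real^'n"
  show "\<exists>b. \<forall>t. (v + t *\<^sub>R u) \<bullet> (D *v (v + t *\<^sub>R u)) = v \<bullet> (D *v v) + b * t + u \<bullet> (D *v u) * t\<^sup>2"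
    by (rule exI[of _ "v \<bullet> (D *v u) + u \<bullet> (D *v v)"])
       (simp add: matrix_vector_right_distrib matrix_vector_mult_scaleR inner_add_left inner_add_right
          power2_eq_square algebra_simps)
qed

lemma quadf_lin2: "quadf (\<lambda>w::real^2. (w$1 * c1 + w$2 * c2)\<^sup>2)"
  unfolding quadf_def
proof (intro allI)
  fix v u :: "real^2"
  show "\<exists>b. \<forall>t. ((v + t *\<^sub>R u)$1 * c1 + (v + t *\<^sub>R u)$2 * c2)\<^sup>2 = (v$1 * c1 + v$2 * c2)\<^sup>2 + b * t + (u$1 * c1 + u$2 * c2)\<^sup>2 * t\<^sup>2"
    by (rule exI[of _ "2 * (v$1 * c1 + v$2 * c2) * (u$1 * c1 + u$2 * c2)"])
       (simp add: power2_eq_square algebra_simps)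
qed

lemma axis_quad: "axis i 1 \<bullet> (D *v axis j 1) = D $ i $ j"
  by (simp add: matrix_vector_mult_basis inner_axis' column_def)

lemma sym_nonzero_quad:
  fixes D :: "real^'n^'n"
  assumes sym: "transpose D = D" and nz: "D \<noteq> 0"
  shows "\<exists>u. u \<bullet> (D *v u) \<noteq> 0"
proof -
  obtain i j where ij: "D $ i $ j \<noteq> 0" using nz by (metis vec_eq_iff zero_index)
  have Dji: "D $ j $ i = D $ i $ j" using sym by (metis transpose_def vec_lambda_beta)
  show ?thesis
  proof (cases "D $ i $ i \<noteq> 0")
    case True then show ?thesis using axis_quad[of i D i] by metis
  next
    case Fi: False
    show ?thesis
    proof (cases "D $ j $ j \<noteq> 0")
      case True then show ?thesis using axis_quad[of j D j] by metis
    next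
      case Fj: False
      have "(axis i 1 + axis j 1) \<bullet> (D *v (axis i 1 + axis j 1)) = D$i$i + D$i$j + D$j$i + D$j$j"
        by (simp add: matrix_vector_right_distrib inner_add_left inner_add_right axis_quad)
      also have "\<dots> = 2 * D$i$j" using Fi Fj Dji by simp
      finally show ?thesis using ij by (metis mult_eq_0_iff zero_neq_numeral)
    qed
  qed
qed

lemma transpose_minus: "transpose (A - B) = transpose A - transpose (B :: real^'n^'n)"
  by (simp add: transpose_def vec_eq_iff)

lemma exists_unit_avoid:
  fixes q :: "'i \<Rightarrow> real^'n \<Rightarrow> real"
  assumes "finite I" "\<And>i. i \<in> I \<Longrightarrow> quadf (q i)" "\<And>i. i \<in> I \<Longrightarrow> \<exists>u. q i u \<noteq> 0"
    and hom: "\<And>i c v. i \<in> I \<Longrightarrow> q i (c *\<^sub>R v) = c\<^sup>2 * q i v"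
  shows "\<exists>v. norm v = 1 \<and> (\<forall>i\<in>I. q i v \<noteq> 0)"
proof -
  obtain v1 where v1: "\<forall>i\<in>I. q i v1 \<noteq> 0" using avoid_zeros[OF assms(1), of q] assms(2,3) by blast
  show ?thesis
  proof (cases "v1 = 0")
    case True
    then have "I = {}" using v1 hom[of _ 0 0] by auto
    then show ?thesis by (intro exI[of _ "axis undefined 1"]) simp
  next
    case False
    show ?thesis
      by (rule exI[of _ "(1 / norm v1) *\<^sub>R v1"]) (use False v1 hom in simp)
  qed
qed

lemma good_point:
  fixes S :: "((real^'d) \<times> (real^'d^'d)) set"
  assumes fin: "finite S" and spd: "S \<subseteq> UNIV \<times> SPD"
  shows "\<exists>w0 v0. norm w0 = 1 \<and> norm v0 = 1 \<and> (\<forall>x\<in>S. \<forall>y\<in>S. x \<noteq> y \<longrightarrow> Pvw v0 w0 x \<noteq> Pvw v0 w0 y)"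
proof -
  define I where "I = {xy \<in> S \<times> S. fst xy \<noteq> snd xy}"
  have If: "finite I" unfolding I_def using fin by simp
  define qv where "qv xy v = (if fst (fst xy) \<noteq> fst (snd xy) then ((fst (fst xy) - fst (snd xy)) \<bullet> v)\<^sup>2
      else v \<bullet> ((snd (fst xy) - snd (snd xy)) *v v))" for xy and v :: "real^'d"
  have qv_quad: "quadf (qv xy)" for xy
  proof (cases "fst (fst xy) \<noteq> fst (snd xy)")
    case True
    then have "qv xy = (\<lambda>v. ((fst (fst xy) - fst (snd xy)) \<bullet> v)\<^sup>2)" by (intro ext) (simp add: qv_def)
    then show ?thesis by (simp add: quadf_inner_sq)
  next
    case False
    then have "qv xy = (\<lambda>v. v \<bullet> ((snd (fst xy) - snd (snd xy)) *v v))" by (intro ext) (simp add: qv_def)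
    then show ?thesis by (simp add: quadf_matrix)
  qed
  have qv_nz: "\<exists>u. qv xy u \<noteq> 0" if "xy \<in> I" for xy
  proof (cases "fst (fst xy) \<noteq> fst (snd xy)")
    case True
    then show ?thesis by (intro exI[of _ "fst (fst xy) - fst (snd xy)"]) (simp add: qv_def)
  next
    case False
    have ne: "snd (fst xy) \<noteq> snd (snd xy)" using that False unfolding I_def by (auto simp: prod_eq_iff)
    have sp: "snd (fst xy) \<in> SPD" "snd (snd xy) \<in> SPD" using that spd unfolding I_def by auto
    have "transpose (snd (fst xy) - snd (snd xy)) = snd (fst xy) - snd (snd xy)"
      using sp by (simp add: transpose_minus SPD_def)
    from sym_nonzero_quad[OF this] ne obtain u where "u \<bullet> ((snd (fst xy) - snd (snd xy)) *v u) \<noteq> 0" by auto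
    then show ?thesis using False by (intro exI[of _ u]) (simp add: qv_def)
  qed
  have qv_hom: "qv xy (c *\<^sub>R v) = c\<^sup>2 * qv xy v" for xy c v
    by (simp add: qv_def matrix_vector_mult_scaleR power2_eq_square algebra_simps)
  obtain v0 where v0: "norm v0 = 1" "\<forall>i\<in>I. qv i v0 \<noteq> 0"
    using exists_unit_avoid[OF If, of qv] qv_quad qv_nz qv_hom by blast
  have v0nz: "v0 \<noteq> 0" using v0 by auto
  define c1 where "c1 xy = v0 \<bullet> fst (fst xy) - v0 \<bullet> fst (snd xy)" for xy :: "((real^'d) \<times> (real^'d^'d)) \<times> ((real^'d) \<times> (real^'d^'d))"
  define c2 where "c2 xy = ln (sqrt (v0 \<bullet> (snd (fst xy) *v v0))) - ln (sqrt (v0 \<bullet> (snd (snd xy) *v v0)))"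
    for xy :: "((real^'d) \<times> (real^'d^'d)) \<times> ((real^'d) \<times> (real^'d^'d))"
  have c_nz: "c1 xy \<noteq> 0 \<or> c2 xy \<noteq> 0" if xy: "xy \<in> I" for xy
  proof (cases "fst (fst xy) \<noteq> fst (snd xy)")
    case True
    have "qv xy v0 \<noteq> 0" using v0(2) xy by blast
    then have "(fst (fst xy) - fst (snd xy)) \<bullet> v0 \<noteq> 0" using True by (simp add: qv_def)
    then show ?thesis unfolding c1_def by (simp add: inner_diff_left inner_diff_right inner_commute)
  next
    case False
    have sp: "snd (fst xy) \<in> SPD" "snd (snd xy) \<in> SPD" using xy spd unfolding I_def by auto
    have pos: "v0 \<bullet> (snd (fst xy) *v v0) > 0" "v0 \<bullet> (snd (snd xy) *v v0) > 0"
      using sp v0nz unfolding SPD_def by auto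
    have "qv xy v0 \<noteq> 0" using v0(2) xy by blast
    then have "v0 \<bullet> ((snd (fst xy) - snd (snd xy)) *v v0) \<noteq> 0" using False by (simp add: qv_def)
    then have "v0 \<bullet> (snd (fst xy) *v v0) \<noteq> v0 \<bullet> (snd (snd xy) *v v0)"
      by (simp add: matrix_vector_mult_diff_rdistrib inner_diff_right)
    then have "c2 xy \<noteq> 0" unfolding c2_def using pos by (simp add: ln_sqrt)
    then show ?thesis by simp
  qed
  define qw where "qw xy w = (w$1 * c1 xy + w$2 * c2 xy)\<^sup>2" for xy and w :: "real^2"
  have qw_quad: "quadf (qw xy)" for xy
  proof -
    have "qw xy = (\<lambda>w::real^2. (w$1 * c1 xy + w$2 * c2 xy)\<^sup>2)" by (intro ext) (simp add: qw_def)
    then show ?thesis by (simp add: quadf_lin2)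
  qed
  have qw_nz: "\<exists>u. qw xy u \<noteq> 0" if "xy \<in> I" for xy
  proof (cases "c1 xy \<noteq> 0")
    case True
    then show ?thesis by (intro exI[of _ "axis 1 1"]) (simp add: qw_def axis_def)
  next
    case False
    then have "c2 xy \<noteq> 0" using c_nz[OF that] by simp
    then show ?thesis by (intro exI[of _ "axis 2 1"]) (simp add: qw_def axis_def)
  qed
  have qw_hom: "qw xy (c *\<^sub>R w) = c\<^sup>2 * qw xy w" for xy c w
    by (simp add: qw_def power2_eq_square algebra_simps)
  obtain w0 where w0: "norm w0 = 1" "\<forall>i\<in>I. qw i w0 \<noteq> 0"
    using exists_unit_avoid[OF If, of qw] qw_quad qw_nz qw_hom by blast
  have "Pvw v0 w0 x \<noteq> Pvw v0 w0 y" if "x \<in> S" "y \<in> S" "x \<noteq> y" for x y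
  proof -
    have "(x, y) \<in> I" using that unfolding I_def by auto
    then have "qw (x,y) w0 \<noteq> 0" using w0(2) by blast
    then have "w0$1 * c1 (x,y) + w0$2 * c2 (x,y) \<noteq> 0" by (simp add: qw_def)
    then show ?thesis unfolding Pvw_def c1_def c2_def by (auto simp: algebra_simps)
  qed
  then show ?thesis using w0 v0 by blast
qed

definition UU :: "((real^2) \<times> (real^'d)) set" where "UU = UNIV \<times> (UNIV - {0})"

lemma open_UU: "open UU" unfolding UU_def by (intro open_Times) auto

lemma mv_cont: "continuous_on S g \<Longrightarrow> continuous_on S (\<lambda>x. (A :: real^'n^'m) *v g x)"
  by (rule bounded_linear.continuous_on[OF matrix_vector_mul_bounded_linear])

lemma Pvw_cont:
  assumes "snd x \<in> SPD"
  shows "continuous_on UU (\<lambda>wv::(real^2)\<times>(real^'d). Pvw (snd wv) (fst wv) x)"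
proof -
  have pos: "\<forall>wv\<in>UU. snd wv \<bullet> (snd x *v snd wv) > 0"
    using assms unfolding UU_def SPD_def by auto
  have c1: "continuous_on UU (\<lambda>wv::(real^2)\<times>(real^'d). snd wv \<bullet> (snd x *v snd wv))"
    by (intro continuous_intros mv_cont)
  have c2: "continuous_on UU (\<lambda>wv::(real^2)\<times>(real^'d). ln (sqrt (snd wv \<bullet> (snd x *v snd wv))))"
    using pos by (intro continuous_on_ln continuous_on_compose2[OF continuous_on_real_sqrt c1]) auto
  show ?thesis unfolding Pvw_def
    by (intro continuous_intros c2)
qed

lemma Pvw_zero: "Pvw 0 w x = 0"
  by (simp add: Pvw_def)

definition cfun :: "real \<Rightarrow> ((real^'d) \<times> (real^'d^'d)) \<times> ((real^'d) \<times> (real^'d^'d)) \<Rightarrow> (real^2) \<times> (real^'d) \<Rightarrow> real" where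
  "cfun p z wv = \<bar>Pvw (snd wv) (fst wv) (fst z) - Pvw (snd wv) (fst wv) (snd z)\<bar> powr p"

lemma cost_eq_sum:
  assumes "finite (set_pmf \<gamma>)"
  shows "cost p (Pvw (snd wv) (fst wv)) \<gamma> = ennreal (\<Sum>z\<in>set_pmf \<gamma>. cfun p z wv * pmf \<gamma> z)"
proof -
  have "cost p (Pvw (snd wv) (fst wv)) \<gamma> = (\<Sum>z\<in>set_pmf \<gamma>. ennreal (cfun p z wv) * ennreal (pmf \<gamma> z))"
    unfolding cost_def cfun_def by (subst nn_integral_measure_pmf_finite[OF assms]) auto
  also have "\<dots> = (\<Sum>z\<in>set_pmf \<gamma>. ennreal (cfun p z wv * pmf \<gamma> z))"
    by (intro sum.cong refl) (simp add: cfun_def ennreal_mult)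
  also have "\<dots> = ennreal (\<Sum>z\<in>set_pmf \<gamma>. cfun p z wv * pmf \<gamma> z)"
    by (rule sum_ennreal) (simp add: cfun_def)
  finally show ?thesis .
qed

lemma cfun_cont:
  fixes z :: "((real^'d) \<times> (real^'d^'d)) \<times> ((real^'d) \<times> (real^'d^'d))"
  assumes p: "p > 0" and spd: "snd (fst z) \<in> SPD" "snd (snd z) \<in> SPD"
  shows "continuous_on (UU :: ((real^2) \<times> (real^'d)) set) (cfun p z)"
proof -
  have "continuous_on UU (\<lambda>wv::(real^2)\<times>(real^'d). \<bar>Pvw (snd wv) (fst wv) (fst z) - Pvw (snd wv) (fst wv) (snd z)\<bar>)"
    by (intro continuous_intros Pvw_cont[OF spd(1)] Pvw_cont[OF spd(2)])
  then have "continuous_on UU (\<lambda>wv::(real^2)\<times>(real^'d). \<bar>Pvw (snd wv) (fst wv) (fst z) - Pvw (snd wv) (fst wv) (snd z)\<bar> powr p)"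
    using p by (intro continuous_on_powr'[OF _ continuous_on_const]) auto
  then show ?thesis unfolding cfun_def[abs_def] .
qed

lemma cost_cont:
  fixes \<gamma> :: "(((real^'d) \<times> (real^'d^'d)) \<times> ((real^'d) \<times> (real^'d^'d))) pmf"
  assumes p: "p > 0" and fin: "finite (set_pmf \<gamma>)"
    and spd: "\<And>z. z \<in> set_pmf \<gamma> \<Longrightarrow> snd (fst z) \<in> SPD \<and> snd (snd z) \<in> SPD"
  shows "continuous_on (UU :: ((real^2) \<times> (real^'d)) set) (\<lambda>wv. \<Sum>z\<in>set_pmf \<gamma>. cfun p z wv * pmf \<gamma> z)"
  using spd by (intro continuous_on_sum continuous_on_mult continuous_on_const cfun_cont p) auto

lemma sets_P: "sets (unif_sphere \<Otimes>\<^sub>M unif_sphere) = sets (borel :: ((real^2) \<times> (real^'d)) measure)"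
proof -
  have "sets (unif_sphere \<Otimes>\<^sub>M unif_sphere) = sets (borel \<Otimes>\<^sub>M (borel :: (real^'d) measure) :: ((real^2) \<times> (real^'d)) measure)"
    by (rule sets_pair_measure_cong) simp_all
  also have "\<dots> = sets (borel :: ((real^2) \<times> (real^'d)) measure)" by (subst borel_prod) (rule refl)
  finally show ?thesis .
qed

lemma CW_zero_v: "p > 0 \<Longrightarrow> CW p (Pvw 0 w) G1 G2 = 0"
proof -
  assume p: "p > 0"
  have "cost p (Pvw 0 w) (pair_pmf G1 G2) = 0" unfolding cost_def using p by (simp add: Pvw_zero)
  then show ?thesis using CW_le_cost[OF pair_in_coup, of p "Pvw 0 w" G1 G2] by simp
qed

lemma CW_meas:
  fixes G1 G2 :: "((real^'d) \<times> (real^'d^'d)) pmf"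
  assumes p: "p > 0" and f1: "finite (set_pmf G1)" and f2: "finite (set_pmf G2)"
    and s1: "set_pmf G1 \<subseteq> UNIV \<times> SPD" and s2: "set_pmf G2 \<subseteq> UNIV \<times> SPD"
  shows "(\<lambda>wv::(real^2)\<times>(real^'d). CW p (Pvw (snd wv) (fst wv)) G1 G2) \<in> borel_measurable borel"
proof (rule borel_measurableI_less)
  fix y :: ennreal
  define Op where "Op = (\<Union>\<gamma>\<in>coup G1 G2. (\<lambda>wv. ennreal (\<Sum>z\<in>set_pmf \<gamma>. cfun p z wv * pmf \<gamma> z)) -` {..<y} \<inter> UU)"
  have oO: "open Op" unfolding Op_def
  proof (intro open_UN ballI)
    fix \<gamma> assume g: "\<gamma> \<in> coup G1 G2"
    have fin: "finite (set_pmf \<gamma>)" by (rule coup_finite[OF g f1 f2])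
    have spd: "\<And>z. z \<in> set_pmf \<gamma> \<Longrightarrow> snd (fst z) \<in> SPD \<and> snd (snd z) \<in> SPD"
      using coup_set[OF g] s1 s2 by auto
    have "continuous_on UU (\<lambda>wv::(real^2)\<times>(real^'d). ennreal (\<Sum>z\<in>set_pmf \<gamma>. cfun p z wv * pmf \<gamma> z))"
      by (intro continuous_on_ennreal cost_cont[OF p fin spd])
    then show "open ((\<lambda>wv::(real^2)\<times>(real^'d). ennreal (\<Sum>z\<in>set_pmf \<gamma>. cfun p z wv * pmf \<gamma> z)) -` {..<y} \<inter> UU)"
      using open_UU continuous_on_open_vimage open_lessThan by blast
  qed
  define Z where "Z = (if 0 < y then UNIV \<times> {0} else {} :: ((real^2) \<times> (real^'d)) set)"
  have cZ: "closed Z" unfolding Z_def by (auto intro: closed_Times)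
  have eq: "{x \<in> space borel. CW p (Pvw (snd x) (fst x)) G1 G2 < y} = Op \<union> Z"
  proof (intro set_eqI iffI)
    fix x :: "(real^2) \<times> (real^'d)"
    assume "x \<in> {x \<in> space borel. CW p (Pvw (snd x) (fst x)) G1 G2 < y}"
    then have lt: "CW p (Pvw (snd x) (fst x)) G1 G2 < y" by simp
    show "x \<in> Op \<union> Z"
    proof (cases "snd x = 0")
      case True
      then have "0 < y" using lt CW_zero_v[OF p, of "fst x" G1 G2] by simp
      then show ?thesis using True unfolding Z_def by (cases x) auto
    next
      case False
      then have xU: "x \<in> UU" unfolding UU_def by (cases x) auto
      from lt obtain \<gamma> where g: "\<gamma> \<in> coup G1 G2" and c: "cost p (Pvw (snd x) (fst x)) \<gamma> < y"
        unfolding CW_def by (auto simp: INF_less_iff)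
      have fin: "finite (set_pmf \<gamma>)" by (rule coup_finite[OF g f1 f2])
      show ?thesis using c xU g unfolding Op_def cost_eq_sum[OF fin] by blast
    qed
  next
    fix x :: "(real^2) \<times> (real^'d)"
    assume "x \<in> Op \<union> Z"
    then show "x \<in> {x \<in> space borel. CW p (Pvw (snd x) (fst x)) G1 G2 < y}"
    proof
      assume "x \<in> Op"
      then obtain \<gamma> where g: "\<gamma> \<in> coup G1 G2" and c: "ennreal (\<Sum>z\<in>set_pmf \<gamma>. cfun p z x * pmf \<gamma> z) < y"
        unfolding Op_def by blast
      have fin: "finite (set_pmf \<gamma>)" by (rule coup_finite[OF g f1 f2])
      have "CW p (Pvw (snd x) (fst x)) G1 G2 < y"
        using CW_le_cost[OF g, of p "Pvw (snd x) (fst x)"] c unfolding cost_eq_sum[OF fin]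
        by (rule le_less_trans)
      then show ?thesis by simp
    next
      assume "x \<in> Z"
      then have "snd x = 0" "0 < y" unfolding Z_def by (auto split: if_splits)
      then show ?thesis using CW_zero_v[OF p, of "fst x" G1 G2] by (cases x) simp
    qed
  qed
  show "{x \<in> space borel. CW p (Pvw (snd x) (fst x)) G1 G2 < y} \<in> sets borel"
    unfolding eq using oO cZ by (intro sets.Un borel_open borel_closed)
qed

lemma PP_pair: "pair_prob_space (unif_sphere :: (real^2) measure) (unif_sphere :: (real^'d) measure)"
  unfolding pair_prob_space_def pair_sigma_finite_def
  by (simp add: unif_sphere_prob prob_space_imp_sigma_finite)

lemma AE_pos_exists:
  assumes ae: "AE x in M. Q x" and B: "B \<in> sets M" and pos: "emeasure M B > 0"
  shows "\<exists>x\<in>B. Q x"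
proof (rule ccontr)
  assume "\<not> ?thesis"
  then have sub: "B \<subseteq> {x\<in>space M. \<not> Q x}" using sets.sets_into_space[OF B] by auto
  from ae obtain N where N: "{x\<in>space M. \<not> Q x} \<subseteq> N" "emeasure M N = 0" "N \<in> sets M" by (rule AE_E)
  have "emeasure M B \<le> emeasure M N" using sub N by (intro emeasure_mono) auto
  then show False using pos N by simp
qed

lemma map_inj_eq:
  assumes "inj_on f S" "set_pmf G1 \<subseteq> S" "set_pmf G2 \<subseteq> S" "map_pmf f G1 = map_pmf f G2"
  shows "G1 = G2"
proof -
  have "G1 = map_pmf (inv_into S f) (map_pmf f G1)"
    unfolding map_pmf_comp using assms(1,2) by (intro map_pmf_idI[symmetric]) (auto simp: inv_into_f_f)
  also have "\<dots> = map_pmf (inv_into S f) (map_pmf f G2)" using assms(4) by simp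
  also have "\<dots> = G2"
    unfolding map_pmf_comp using assms(1,3) by (intro map_pmf_idI) (auto simp: inv_into_f_f)
  finally show ?thesis .
qed

lemma SMixWpp_CW:
  fixes G1 G2 :: "((real^'d) \<times> (real^'d^'d)) pmf"
  assumes "finite (set_pmf G1)" "finite (set_pmf G2)"
  shows "SMixWpp p G1 G2 = (\<integral>\<^sup>+wv. CW p (Pvw (snd wv) (fst wv)) G1 G2 \<partial>(unif_sphere \<Otimes>\<^sub>M (unif_sphere :: (real^'d) measure)))"
  unfolding SMixWpp_def push_def using Wpp_CW[OF assms] by simp

lemma Qstar_fin: "G \<in> Qstar p \<Longrightarrow> finite (set_pmf G)" by (simp add: Qstar_def)
lemma Qstar_spd: "G \<in> Qstar p \<Longrightarrow> set_pmf G \<subseteq> UNIV \<times> SPD" by (simp add: Qstar_def)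

lemma AE_K: "AE wv in (unif_sphere \<Otimes>\<^sub>M (unif_sphere :: (real^'d) measure)). norm (fst wv :: real^2) = 1 \<and> norm (snd wv) = 1"
proof -
  interpret PP: pair_prob_space "unif_sphere :: (real^2) measure" "unif_sphere :: (real^'d) measure"
    by (rule PP_pair)
  have h1: "AE x in (unif_sphere :: (real^2) measure). norm x = 1" by (rule unif_sphere_AE)
  have h2: "AE y in (unif_sphere :: (real^'d) measure). norm y = 1" by (rule unif_sphere_AE)
  have m: "{x \<in> space (unif_sphere \<Otimes>\<^sub>M unif_sphere). norm (fst x :: real^2) = 1 \<and> norm (snd x :: real^'d) = 1}
      \<in> sets (unif_sphere \<Otimes>\<^sub>M unif_sphere)"
  proof -
    have "{x \<in> space (unif_sphere \<Otimes>\<^sub>M unif_sphere). norm (fst x :: real^2) = 1 \<and> norm (snd x :: real^'d) = 1}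
        = {x. norm (fst x :: real^2) = 1 \<and> norm (snd x :: real^'d) = 1}" by (simp add: space_pair_measure)
    moreover have "closed {x :: (real^2) \<times> (real^'d). norm (fst x) = 1 \<and> norm (snd x) = 1}"
      by (intro closed_Collect_conj closed_Collect_eq continuous_intros)
    ultimately show ?thesis unfolding sets_P by (simp add: borel_closed)
  qed
  show ?thesis
  proof (rule PP.AE_pair_measure[OF m])
    show "AE x in unif_sphere. AE y in unif_sphere. norm (fst (x, y) :: real^2) = 1 \<and> norm (snd (x, y) :: real^'d) = 1"
    proof (rule AE_mp[OF h1], rule AE_I2, rule impI)
      fix x :: "real^2" assume x: "x \<in> space unif_sphere" "norm x = 1"
      show "AE y in unif_sphere. norm (fst (x, y)) = 1 \<and> norm (snd (x, y) :: real^'d) = 1"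
        by (rule AE_mp[OF h2], rule AE_I2) (simp add: x)
    qed
  qed
qed

abbreviation PM :: "((real^2) \<times> (real^'d)) measure" where
  "PM \<equiv> unif_sphere \<Otimes>\<^sub>M unif_sphere"

lemma CW_meas_P:
  fixes G1 G2 :: "((real^'d) \<times> (real^'d^'d)) pmf"
  assumes "p > 0" "finite (set_pmf G1)" "finite (set_pmf G2)"
    "set_pmf G1 \<subseteq> UNIV \<times> SPD" "set_pmf G2 \<subseteq> UNIV \<times> SPD"
  shows "(\<lambda>wv. CW p (Pvw (snd wv) (fst wv)) G1 G2) \<in> borel_measurable (PM :: ((real^2) \<times> (real^'d)) measure)"
proof -
  have "measurable (PM :: ((real^2) \<times> (real^'d)) measure) (borel :: ennreal measure) = measurable borel borel"
    by (rule measurable_cong_sets[OF sets_P refl])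
  then show ?thesis using CW_meas[OF assms] by simp
qed

lemma SMix_fin:
  fixes G1 G2 :: "((real^'d) \<times> (real^'d^'d)) pmf"
  assumes p: "p > 0" and f1: "finite (set_pmf G1)" and f2: "finite (set_pmf G2)"
    and s1: "set_pmf G1 \<subseteq> UNIV \<times> SPD" and s2: "set_pmf G2 \<subseteq> UNIV \<times> SPD"
  shows "SMixWpp p G1 G2 < \<infinity>"
proof -
  interpret PP: pair_prob_space "unif_sphere :: (real^2) measure" "unif_sphere :: (real^'d) measure"
    by (rule PP_pair)
  define \<gamma> where "\<gamma> = pair_pmf G1 G2"
  have g: "\<gamma> \<in> coup G1 G2" unfolding \<gamma>_def by (rule pair_in_coup)
  have fin: "finite (set_pmf \<gamma>)" by (rule coup_finite[OF g f1 f2])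
  have spd: "\<And>z. z \<in> set_pmf \<gamma> \<Longrightarrow> snd (fst z) \<in> SPD \<and> snd (snd z) \<in> SPD"
    using coup_set[OF g] s1 s2 by auto
  define c where "c wv = (\<Sum>z\<in>set_pmf \<gamma>. cfun p z wv * pmf \<gamma> z)" for wv :: "(real^2) \<times> (real^'d)"
  define K where "K = sphere (0::real^2) 1 \<times> sphere (0::real^'d) 1"
  have KU: "K \<subseteq> UU" unfolding K_def UU_def by auto
  have cc: "continuous_on K c" unfolding c_def
    by (rule continuous_on_subset[OF cost_cont[OF p fin spd] KU])
  have "compact K" unfolding K_def by (intro compact_Times compact_sphere)
  then have "compact (c ` K)" using cc compact_continuous_image by blast
  then obtain B where B: "\<And>wv. wv \<in> K \<Longrightarrow> norm (c wv) \<le> B"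
    using compact_imp_bounded bounded_iff by (metis image_eqI)
  have "SMixWpp p G1 G2 = (\<integral>\<^sup>+wv. CW p (Pvw (snd wv) (fst wv)) G1 G2 \<partial>PM)"
    by (rule SMixWpp_CW[OF f1 f2])
  also have "\<dots> \<le> (\<integral>\<^sup>+wv. ennreal B \<partial>(PM :: ((real^2) \<times> (real^'d)) measure))"
  proof (rule nn_integral_mono_AE)
    show "AE wv in PM. CW p (Pvw (snd wv) (fst wv)) G1 G2 \<le> ennreal B"
      using AE_K
    proof (rule AE_mp, intro AE_I2 impI)
      fix wv :: "(real^2) \<times> (real^'d)"
      assume "norm (fst wv) = 1 \<and> norm (snd wv) = 1"
      then have wK: "wv \<in> K" unfolding K_def by (cases wv) auto
      have "CW p (Pvw (snd wv) (fst wv)) G1 G2 \<le> cost p (Pvw (snd wv) (fst wv)) \<gamma>" by (rule CW_le_cost[OF g])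
      also have "\<dots> = ennreal (c wv)" unfolding c_def by (rule cost_eq_sum[OF fin])
      also have "\<dots> \<le> ennreal B" using B[OF wK] by (intro ennreal_leI) simp
      finally show "CW p (Pvw (snd wv) (fst wv)) G1 G2 \<le> ennreal B" .
    qed
  qed
  also have "\<dots> = ennreal B" using PP.P.emeasure_space_1 by simp
  finally show ?thesis by (simp add: le_less_trans)
qed

lemma part_sym:
  fixes G1 G2 :: "((real^'d) \<times> (real^'d^'d)) pmf"
  assumes "G1 \<in> Qstar p" "G2 \<in> Qstar p"
  shows "SMixWp p G1 G2 = SMixWp p G2 G1"
  unfolding SMixWp_def SMixWpp_CW[OF Qstar_fin[OF assms(1)] Qstar_fin[OF assms(2)]]
    SMixWpp_CW[OF Qstar_fin[OF assms(2)] Qstar_fin[OF assms(1)]]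
  by (subst CW_sym) (rule refl)

lemma part_tri:
  fixes G1 G2 G3 :: "((real^'d) \<times> (real^'d^'d)) pmf"
  assumes p: "p \<ge> 1" and q: "G1 \<in> Qstar p" "G2 \<in> Qstar p" "G3 \<in> Qstar p"
  shows "SMixWp p G1 G3 \<le> SMixWp p G1 G2 + SMixWp p G2 G3"
proof -
  have p0: "p > 0" using p by simp
  note f = Qstar_fin[OF q(1)] Qstar_fin[OF q(2)] Qstar_fin[OF q(3)]
  note s = Qstar_spd[OF q(1)] Qstar_spd[OF q(2)] Qstar_spd[OF q(3)]
  define c where "c H1 H2 wv = enn2real (CW p (Pvw (snd wv) (fst wv)) H1 H2)"
    for H1 H2 :: "((real^'d) \<times> (real^'d^'d)) pmf" and wv :: "(real^2) \<times> (real^'d)"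
  have cnn: "c H1 H2 wv \<ge> 0" for H1 H2 wv unfolding c_def by simp
  have CWc: "CW p (Pvw (snd wv) (fst wv)) H1 H2 = ennreal (c H1 H2 wv)"
    if "finite (set_pmf H1)" "finite (set_pmf H2)" for H1 H2 wv
    unfolding c_def using CW_finite[OF that, of p "Pvw (snd wv) (fst wv)"]
    by (simp add: ennreal_enn2real_if less_top[symmetric])
  have X: "SMixWpp p H1 H2 = (\<integral>\<^sup>+wv. ennreal (c H1 H2 wv) \<partial>PM)"
    if "finite (set_pmf H1)" "finite (set_pmf H2)" for H1 H2
    unfolding SMixWpp_CW[OF that] using CWc[OF that] by simp
  have cm: "c H1 H2 \<in> borel_measurable PM"
    if "finite (set_pmf H1)" "finite (set_pmf H2)" "set_pmf H1 \<subseteq> UNIV \<times> SPD" "set_pmf H2 \<subseteq> UNIV \<times> SPD" for H1 H2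
    unfolding c_def[abs_def] by (rule borel_measurable_enn2real[OF CW_meas_P[OF p0 that]])
  define F where "F wv = c G1 G2 wv powr (1/p)" for wv
  define G where "G wv = c G2 G3 wv powr (1/p)" for wv
  have pw: "F wv powr p = c G1 G2 wv" "G wv powr p = c G2 G3 wv" for wv
    unfolding F_def G_def using p cnn by (simp_all add: powr_powr)
  have Fm: "F \<in> borel_measurable PM" unfolding F_def using cm[OF f(1,2) s(1,2)] by measurable
  have Gm: "G \<in> borel_measurable PM" unfolding G_def using cm[OF f(2,3) s(2,3)] by measurable
  have fin12: "SMixWpp p G1 G2 < \<infinity>" by (rule SMix_fin[OF p0 f(1,2) s(1,2)])
  have fin23: "SMixWpp p G2 G3 < \<infinity>" by (rule SMix_fin[OF p0 f(2,3) s(2,3)])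
  have fin13: "SMixWpp p G1 G3 < \<infinity>" by (rule SMix_fin[OF p0 f(1,3) s(1,3)])
  have IF: "(\<integral>\<^sup>+wv. ennreal (F wv powr p) \<partial>PM) = SMixWpp p G1 G2" unfolding pw X[OF f(1,2)] ..
  have IG: "(\<integral>\<^sup>+wv. ennreal (G wv powr p) \<partial>PM) = SMixWpp p G2 G3" unfolding pw X[OF f(2,3)] ..
  define R where "R = enn2real (SMixWpp p G1 G2) powr (1/p) + enn2real (SMixWpp p G2 G3) powr (1/p)"
  have R0: "R \<ge> 0" unfolding R_def by simp
  have "SMixWpp p G1 G3 = (\<integral>\<^sup>+wv. ennreal (c G1 G3 wv) \<partial>PM)" by (rule X[OF f(1,3)])
  also have "\<dots> \<le> (\<integral>\<^sup>+wv. ennreal ((F wv + G wv) powr p) \<partial>PM)"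
  proof (rule nn_integral_mono)
    fix wv
    have t: "c G1 G3 wv powr (1/p) \<le> F wv + G wv"
      unfolding c_def F_def G_def by (rule CW_triangle[OF p f])
    have "c G1 G3 wv = (c G1 G3 wv powr (1/p)) powr p" using p cnn by (simp add: powr_powr)
    also have "\<dots> \<le> (F wv + G wv) powr p" using t p by (intro powr_mono2) auto
    finally show "ennreal (c G1 G3 wv) \<le> ennreal ((F wv + G wv) powr p)" by (rule ennreal_leI)
  qed
  also have "\<dots> \<le> ennreal (R powr p)"
    unfolding R_def IF[symmetric] IG[symmetric]
    by (rule minkowski_nn[OF p Fm Gm]) (use IF IG fin12 fin23 in \<open>auto simp: F_def G_def\<close>)
  finally have le: "SMixWpp p G1 G3 \<le> ennreal (R powr p)" .
  have "enn2real (SMixWpp p G1 G3) \<le> R powr p"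
    using le by (metis enn2real_ennreal enn2real_mono ennreal_less_top powr_ge_zero)
  then have "enn2real (SMixWpp p G1 G3) powr (1/p) \<le> (R powr p) powr (1/p)"
    using p by (intro powr_mono2) auto
  also have "\<dots> = R" using p R0 by (simp add: powr_powr)
  finally show ?thesis unfolding SMixWp_def R_def .
qed

lemma part_zero:
  fixes G1 G2 :: "((real^'d) \<times> (real^'d^'d)) pmf"
  assumes p: "p \<ge> 1" and q: "G1 \<in> Qstar p" "G2 \<in> Qstar p"
  shows "SMixWp p G1 G2 = 0 \<longleftrightarrow> G1 = G2"
proof
  have p0: "p > 0" using p by simp
  note f = Qstar_fin[OF q(1)] Qstar_fin[OF q(2)]
  note s = Qstar_spd[OF q(1)] Qstar_spd[OF q(2)]
  interpret PP: pair_prob_space "unif_sphere :: (real^2) measure" "unif_sphere :: (real^'d) measure"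
    by (rule PP_pair)
  assume z: "SMixWp p G1 G2 = 0"
  have "enn2real (SMixWpp p G1 G2) = 0" using z unfolding SMixWp_def by simp
  then have "SMixWpp p G1 G2 = 0" using SMix_fin[OF p0 f s] by (auto simp: enn2real_eq_0_iff)
  then have "(\<integral>\<^sup>+wv. CW p (Pvw (snd wv) (fst wv)) G1 G2 \<partial>PM) = 0" using SMixWpp_CW[OF f] by simp
  then have "AE wv in PM. CW p (Pvw (snd wv) (fst wv)) G1 G2 = 0"
    using nn_integral_0_iff_AE[OF CW_meas_P[OF p0 f s]] by simp
  then have ae: "AE wv in PM. map_pmf (Pvw (snd wv) (fst wv)) G1 = map_pmf (Pvw (snd wv) (fst wv)) G2"
    by (rule AE_mp) (intro AE_I2 impI CW_zero[OF p0 f])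
  define S where "S = set_pmf G1 \<union> set_pmf G2"
  have Sf: "finite S" "S \<subseteq> UNIV \<times> SPD" unfolding S_def using f s by auto
  obtain w0 v0 where wv0: "norm (w0::real^2) = 1" "norm (v0::real^'d) = 1"
    and inj0: "\<forall>x\<in>S. \<forall>y\<in>S. x \<noteq> y \<longrightarrow> Pvw v0 w0 x \<noteq> Pvw v0 w0 y"
    using good_point[OF Sf] by blast
  define I where "I = {xy \<in> S \<times> S. fst xy \<noteq> snd xy}"
  have If: "finite I" unfolding I_def using Sf by simp
  define h where "h xy wv = Pvw (snd wv) (fst wv) (fst xy) - Pvw (snd wv) (fst wv) (snd xy)"
    for xy :: "((real^'d) \<times> (real^'d^'d)) \<times> ((real^'d) \<times> (real^'d^'d))" and wv :: "(real^2) \<times> (real^'d)"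
  define Op where "Op = (\<Inter>xy\<in>I. h xy -` (- {0}) \<inter> UU) \<inter> UU"
  have oOp: "open Op" unfolding Op_def
  proof (rule open_Int[OF open_INT[OF If] open_UU], rule ballI)
    fix xy assume "xy \<in> I"
    then have sp: "snd (fst xy) \<in> SPD" "snd (snd xy) \<in> SPD" using Sf unfolding I_def by auto
    have "continuous_on UU (h xy)" unfolding h_def[abs_def]
      by (intro continuous_on_diff Pvw_cont sp)
    then show "open (h xy -` (- {0}) \<inter> UU)" using open_UU continuous_on_open_vimage open_Compl[OF closed_singleton] by blast
  qed
  have inOp: "(w0, v0) \<in> Op"
    unfolding Op_def UU_def h_def I_def using inj0 wv0 by auto
  obtain A B where AB: "open A" "open B" "(w0, v0) \<in> A \<times> B" "A \<times> B \<subseteq> Op"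
    using open_prod_elim[OF oOp inOp] by blast
  obtain r1 where r1: "r1 > 0" "ball w0 r1 \<subseteq> A" using AB(1,3) openE by (metis mem_Times_iff fst_conv)
  obtain r2 where r2: "r2 > 0" "ball v0 r2 \<subseteq> B" using AB(2,3) openE by (metis mem_Times_iff snd_conv)
  define Bx where "Bx = ball w0 r1 \<times> ball v0 r2"
  have BxOp: "Bx \<subseteq> Op" unfolding Bx_def using r1 r2 AB(4) by blast
  have Bxs: "Bx \<in> sets PM" unfolding Bx_def sets_P by (intro borel_open open_Times open_ball)
  have "emeasure PM Bx = emeasure unif_sphere (ball w0 r1) * emeasure unif_sphere (ball v0 r2)"
    unfolding Bx_def by (rule PP.M2.emeasure_pair_measure_Times) simp_all
  also have "\<dots> > 0" using unif_sphere_ball_pos[OF wv0(1) r1(1)] unif_sphere_ball_pos[OF wv0(2) r2(1)]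
    by (simp add: ennreal_zero_less_mult_iff)
  finally have Bpos: "emeasure PM Bx > 0" .
  obtain wv where wvB: "wv \<in> Bx" and eq: "map_pmf (Pvw (snd wv) (fst wv)) G1 = map_pmf (Pvw (snd wv) (fst wv)) G2"
    using AE_pos_exists[OF ae Bxs Bpos] by blast
  have "wv \<in> Op" using wvB BxOp by blast
  then have hz: "\<And>xy. xy \<in> I \<Longrightarrow> h xy wv \<noteq> 0" unfolding Op_def by blast
  have "inj_on (Pvw (snd wv) (fst wv)) S"
  proof (rule inj_onI, rule ccontr)
    fix x y assume "x \<in> S" "y \<in> S" "Pvw (snd wv) (fst wv) x = Pvw (snd wv) (fst wv) y" "x \<noteq> y"
    then have "(x, y) \<in> I" "h (x, y) wv = 0" unfolding I_def h_def by auto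
    then show False using hz by blast
  qed
  then show "G1 = G2" by (rule map_inj_eq) (use eq in \<open>auto simp: S_def\<close>)
next
  have p0: "p > 0" using p by simp
  note f = Qstar_fin[OF q(1)] Qstar_fin[OF q(2)]
  assume "G1 = G2"
  have "SMixWpp p G1 G2 = (\<integral>\<^sup>+wv. CW p (Pvw (snd wv) (fst wv)) G1 G2 \<partial>PM)" by (rule SMixWpp_CW[OF f])
  also have "\<dots> = (\<integral>\<^sup>+wv. 0 \<partial>(PM :: ((real^2) \<times> (real^'d)) measure))"
    using \<open>G1 = G2\<close> by (intro nn_integral_cong) (simp add: CW_diag[OF p0])
  finally have "SMixWpp p G1 G2 = 0" by simp
  then show "SMixWp p G1 G2 = 0" unfolding SMixWp_def by simp
qed

theorem theorem2:
  fixes p :: real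
  assumes "p \<ge> 1"
  shows "(\<forall>(G1 :: ((real^'d) \<times> (real^'d^'d)) pmf) \<in> Qstar p. \<forall>G2 \<in> Qstar p. SMixWp p G1 G2 \<ge> 0) \<and>
         (\<forall>(G1 :: ((real^'d) \<times> (real^'d^'d)) pmf) \<in> Qstar p. \<forall>G2 \<in> Qstar p. SMixWp p G1 G2 = SMixWp p G2 G1) \<and>
         (\<forall>(G1 :: ((real^'d) \<times> (real^'d^'d)) pmf) \<in> Qstar p. \<forall>G2 \<in> Qstar p. \<forall>G3 \<in> Qstar p.
             SMixWp p G1 G3 \<le> SMixWp p G1 G2 + SMixWp p G2 G3) \<and>
         (\<forall>(G1 :: ((real^'d) \<times> (real^'d^'d)) pmf) \<in> Qstar p. \<forall>G2 \<in> Qstar p.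
             SMixWp p G1 G2 = 0 \<longleftrightarrow> G1 = G2)"
proof (intro conjI ballI)
  fix G1 G2 :: "((real^'d) \<times> (real^'d^'d)) pmf"
  show "SMixWp p G1 G2 \<ge> 0" unfolding SMixWp_def by simp
next
  fix G1 G2 :: "((real^'d) \<times> (real^'d^'d)) pmf"
  assume "G1 \<in> Qstar p" "G2 \<in> Qstar p"
  then show "SMixWp p G1 G2 = SMixWp p G2 G1" by (rule part_sym)
next
  fix G1 G2 G3 :: "((real^'d) \<times> (real^'d^'d)) pmf"
  assume "G1 \<in> Qstar p" "G2 \<in> Qstar p" "G3 \<in> Qstar p"
  then show "SMixWp p G1 G3 \<le> SMixWp p G1 G2 + SMixWp p G2 G3" by (rule part_tri[OF assms])
next
  fix G1 G2 :: "((real^'d) \<times> (real^'d^'d)) pmf"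
  assume "G1 \<in> Qstar p" "G2 \<in> Qstar p"
  then show "SMixWp p G1 G2 = 0 \<longleftrightarrow> G1 = G2" by (rule part_zero[OF assms])
qed

end
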